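(* Let $m$ and $n$ be positive integers, let $(K,\partial_0,\dots,\partial_{m-1})$ be a field with $m$ commuting derivations, and let $L=K(a_h^{\xi}\colon(\xi,h)\lhd(\tau,\ell))$ be a field extension of $K$ generated by elements indexed by the initial segment of $(\mathbb{N}^m\times n,\unlhd)$ below $(\tau,\ell)$, where $(\tau,\ell)\in\mathbb{N}^m\times n$ or $(\tau,\ell)=\infty$. Suppose $L$, with these generators, meets the differential condition. Then: (1) each $\partial_i$ extends to a derivation $D_i$ from $K(a_h^{\xi}\colon(\xi+\varepsilon_i,h)\lhd(\tau,\ell))$ into $L$ such that $D_ia_k^{\sigma}=a_k^{\sigma+\varepsilon_i}$ whenever $(\sigma+\varepsilon_i,k)\lhd(\tau,\ell)$; (2) if $a_k^{\sigma}$ is a separable leader and $(\sigma+\varepsilon_i,k)\lhd(\tau,\ell)$, then $a_k^{\sigma+\varepsilon_i}\in K(a_h^{\xi}\colon(\xi,h)\lhd(\sigma+\varepsilon_i,k))$; in particular $a_k^{\sigma+\varepsilon_i}$ is a separable leader; (3) consequently, every generator $a_k^{\rho}$ of $L/K$ that is above a separable leader $a_k^{\sigma}$ (i.e. $\sigma\le\rho$) is itself a separable leader.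
   Context: $n$ denotes also the set $\{0,\dots,n-1\}$. For $\sigma\in\mathbb{N}^m$ write $|\sigma|=\sum_{i<m}\sigma(i)$, and let $\le$ be the componentwise (product) order on $\mathbb{N}^m$. For $i<m$, $\varepsilon_i\in\mathbb{N}^m$ is the characteristic function of $\{i\}$; addition/subtraction on $\mathbb{N}^m$ is componentwise. The total order $\unlhd$ on $\mathbb{N}^m\times n$ is defined by $(\xi,k)\unlhd(\eta,g)$ iff $(|\xi|,k,\xi(0),\dots,\xi(m-2))$ is lexicographically $\le(|\eta|,g,\eta(0),\dots,\eta(m-2))$; $\lhd$ is its strict version, and $(\sigma,k)\lhd\infty$ for all $(\sigma,k)$. For $L=K(a_h^{\xi}\colon(\xi,h)\lhd(\tau,\ell))$: $a_k^\sigma$ is below $a_k^\rho$ (and $a_k^\rho$ above $a_k^\sigma$) if $\sigma\le\rho$. $L$ meets the differential condition if: whenever $i<m$, $(\sigma+\varepsilon_i,k)\lhd(\tau,\ell)$, and $f$ is a polynomial over $K$ in variables $(x_h^{\xi}\colon(\xi,h)\unlhd(\sigma,k))$ with $f(a_h^{\xi}\colon(\xi,h)\unlhd(\sigma,k))=0$, then $\sum_{(\eta,g)\unlhd(\sigma,k)}\frac{\partial f}{\partial x_g^{\eta}}(a)\cdot a_g^{\eta+\varepsilon_i}+f^{\partial_i}(a)=0$, where $a=(a_h^{\xi}\colon(\xi,h)\unlhd(\sigma,k))$ and $f^{\partial_i}$ is obtained from $f$ by applying $\partial_i$ to its coefficients. A generator $a_k^{\sigma}$ is a leader if it is algebraic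 over $K(a_h^{\xi}\colon(\xi,h)\lhd(\sigma,k))$, and a separable leader if it is separably algebraic over that field. *)

theory Defs
  imports "HOL-Computational_Algebra.Computational_Algebra"
begin

text \<open>Indices: elements of N^m x n, with N^m rendered as functions nat => nat
  vanishing outside {..<m}.  An index is a pair (xi, k).\<close>

type_synonym idx = "(nat \<Rightarrow> nat) \<times> nat"

definition indices :: "nat \<Rightarrow> nat \<Rightarrow> idx set" where
  "indices m n = {(\<xi>, k). (\<forall>i\<ge>m. \<xi> i = 0) \<and> k < n}"

definition add_eps :: "(nat \<Rightarrow> nat) \<Rightarrow> nat \<Rightarrow> (nat \<Rightarrow> nat)" where
  "add_eps \<sigma> i = (\<lambda>j. if j = i then \<sigma> j + 1 else \<sigma> j)"

definition idx_key :: "nat \<Rightarrow> idx \<Rightarrow> nat list" where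
  "idx_key m p = (sum (fst p) {..<m}) # snd p # map (fst p) [0..<m - 1]"

definition idx_lt :: "nat \<Rightarrow> idx \<Rightarrow> idx \<Rightarrow> bool" where
  "idx_lt m p q \<longleftrightarrow> (idx_key m p, idx_key m q) \<in> lexord {(x, y). x < y}"

definition idx_le :: "nat \<Rightarrow> idx \<Rightarrow> idx \<Rightarrow> bool" where
  "idx_le m p q \<longleftrightarrow> idx_key m p = idx_key m q \<or> idx_lt m p q"

text \<open>Comparison with a bound that is either an index (Some q) or infinity (None).\<close>
definition idx_lt_bnd :: "nat \<Rightarrow> idx \<Rightarrow> idx option \<Rightarrow> bool" where
  "idx_lt_bnd m p b = (case b of None \<Rightarrow> True | Some q \<Rightarrow> idx_lt m p q)"

definition is_subfield :: "'a::field set \<Rightarrow> bool" where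
  "is_subfield F \<longleftrightarrow> 0 \<in> F \<and> 1 \<in> F \<and>
     (\<forall>x\<in>F. \<forall>y\<in>F. x + y \<in> F \<and> x - y \<in> F \<and> x * y \<in> F) \<and>
     (\<forall>x\<in>F. inverse x \<in> F)"

definition field_gen :: "'a::field set \<Rightarrow> 'a set \<Rightarrow> 'a set" where
  "field_gen K S = \<Inter> {F. is_subfield F \<and> K \<subseteq> F \<and> S \<subseteq> F}"

definition is_derivation :: "'a::field set \<Rightarrow> 'a set \<Rightarrow> ('a \<Rightarrow> 'a) \<Rightarrow> bool" where
  "is_derivation F L D \<longleftrightarrow> (\<forall>x\<in>F. D x \<in> L) \<and>
     (\<forall>x\<in>F. \<forall>y\<in>F. D (x + y) = D x + D y \<and> D (x * y) = x * D y + D x * y)"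

definition poly_over :: "'a::field set \<Rightarrow> 'a poly \<Rightarrow> bool" where
  "poly_over F p \<longleftrightarrow> (\<forall>i. coeff p i \<in> F)"

definition algebraic_over :: "'a::field set \<Rightarrow> 'a \<Rightarrow> bool" where
  "algebraic_over F x \<longleftrightarrow> (\<exists>p. p \<noteq> 0 \<and> poly_over F p \<and> poly p x = 0)"

definition is_min_poly :: "'a::field set \<Rightarrow> 'a \<Rightarrow> 'a poly \<Rightarrow> bool" where
  "is_min_poly F x p \<longleftrightarrow> poly_over F p \<and> lead_coeff p = 1 \<and> poly p x = 0 \<and>
     (\<forall>q. q \<noteq> 0 \<and> poly_over F q \<and> poly q x = 0 \<longrightarrow> degree p \<le> degree q)"

definition separable_poly :: "'a::field poly \<Rightarrow> bool" where
  "separable_poly p \<longleftrightarrow> coprime p (pderiv p)"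

definition separably_algebraic_over :: "'a::field set \<Rightarrow> 'a \<Rightarrow> bool" where
  "separably_algebraic_over F x \<longleftrightarrow> (\<exists>p. is_min_poly F x p \<and> separable_poly p)"

text \<open>Multivariate polynomials over K in variables indexed by idx, written out as
  finitely supported coefficient functions on monomials (exponent functions).\<close>
type_synonym monom = "idx \<Rightarrow> nat"

definition mpoly_over :: "'a::field set \<Rightarrow> idx set \<Rightarrow> (monom \<Rightarrow> 'a) \<Rightarrow> bool" where
  "mpoly_over K V f \<longleftrightarrow> finite {M. f M \<noteq> 0} \<and> (\<forall>M. f M \<in> K) \<and>
     (\<forall>M. f M \<noteq> 0 \<longrightarrow> finite {v. M v \<noteq> 0} \<and> {v. M v \<noteq> 0} \<subseteq> V)"

definition mono_eval :: "monom \<Rightarrow> (idx \<Rightarrow> 'a::field) \<Rightarrow> 'a" where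
  "mono_eval M a = (\<Prod>v\<in>{v. M v \<noteq> 0}. a v ^ M v)"

definition mpoly_eval :: "(monom \<Rightarrow> 'a::field) \<Rightarrow> (idx \<Rightarrow> 'a) \<Rightarrow> 'a" where
  "mpoly_eval f a = (\<Sum>M\<in>{M. f M \<noteq> 0}. f M * mono_eval M a)"

definition mpoly_pderiv_eval :: "(monom \<Rightarrow> 'a::field) \<Rightarrow> idx \<Rightarrow> (idx \<Rightarrow> 'a) \<Rightarrow> 'a" where
  "mpoly_pderiv_eval f w a =
     (\<Sum>M\<in>{M. f M \<noteq> 0}. f M * of_nat (M w) * mono_eval (M(w := M w - 1)) a)"

definition mpoly_coeff_deriv_eval :: "('a \<Rightarrow> 'a) \<Rightarrow> (monom \<Rightarrow> 'a::field) \<Rightarrow> (idx \<Rightarrow> 'a) \<Rightarrow> 'a" where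
  "mpoly_coeff_deriv_eval d f a = (\<Sum>M\<in>{M. f M \<noteq> 0}. d (f M) * mono_eval M a)"

definition gen_below :: "nat \<Rightarrow> nat \<Rightarrow> 'a::field set \<Rightarrow> (idx \<Rightarrow> 'a) \<Rightarrow> idx option \<Rightarrow> 'a set" where
  "gen_below m n K a b = field_gen K (a ` {p \<in> indices m n. idx_lt_bnd m p b})"

definition separable_leader :: "nat \<Rightarrow> nat \<Rightarrow> 'a::field set \<Rightarrow> (idx \<Rightarrow> 'a) \<Rightarrow> idx \<Rightarrow> bool" where
  "separable_leader m n K a p \<longleftrightarrow> separably_algebraic_over (gen_below m n K a (Some p)) (a p)"

definition differential_condition ::
  "nat \<Rightarrow> nat \<Rightarrow> 'a::field set \<Rightarrow> (nat \<Rightarrow> 'a \<Rightarrow> 'a) \<Rightarrow> (idx \<Rightarrow> 'a) \<Rightarrow> idx option \<Rightarrow> bool" where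
  "differential_condition m n K d a b \<longleftrightarrow>
    (\<forall>i<m. \<forall>\<sigma> k f. (\<sigma>, k) \<in> indices m n \<and> idx_lt_bnd m (add_eps \<sigma> i, k) b \<and>
       mpoly_over K {p \<in> indices m n. idx_le m p (\<sigma>, k)} f \<and> mpoly_eval f a = 0 \<longrightarrow>
       (\<Sum>(\<eta>, g)\<in>{p \<in> indices m n. idx_le m p (\<sigma>, k)}.
           mpoly_pderiv_eval f (\<eta>, g) a * a (add_eps \<eta> i, g))
       + mpoly_coeff_deriv_eval (d i) f a = 0)"

end

theory Submission
  imports Defs
begin

lemma trans_less_nat: "trans {(x::nat, y). x < y}"
  by (auto simp: trans_def)

lemma idx_lt_trans: "idx_lt m p q \<Longrightarrow> idx_lt m q r \<Longrightarrow> idx_lt m p r"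
  unfolding idx_lt_def using lexord_trans trans_less_nat by blast

lemma idx_lt_bnd_trans: "idx_lt m p q \<Longrightarrow> idx_lt_bnd m q b \<Longrightarrow> idx_lt_bnd m p b"
  by (cases b) (auto simp: idx_lt_bnd_def intro: idx_lt_trans)

lemma idx_lt_irrefl: "\<not> idx_lt m p p"
  unfolding idx_lt_def by (rule lexord_irreflexive) auto

lemma idx_le_lt_trans: "idx_le m p q \<Longrightarrow> idx_lt m q r \<Longrightarrow> idx_lt m p r"
  unfolding idx_le_def by (auto simp: idx_lt_def intro: idx_lt_trans[unfolded idx_lt_def])

lemma idx_le_trans: "idx_le m p q \<Longrightarrow> idx_le m q r \<Longrightarrow> idx_le m p r"
  unfolding idx_le_def idx_lt_def using lexord_trans[OF _ _ trans_less_nat] by metis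

lemma idx_lt_imp_le: "idx_lt m p q \<Longrightarrow> idx_le m p q"
  by (simp add: idx_le_def)

lemma idx_le_refl: "idx_le m p p"
  by (simp add: idx_le_def)

lemma key_inj:
  assumes "m > 0" "p \<in> indices m n" "q \<in> indices m n" "idx_key m p = idx_key m q"
  shows "p = q"
proof -
  obtain \<xi> h \<eta> g where pq: "p = (\<xi>, h)" "q = (\<eta>, g)" by (cases p, cases q)
  have z: "\<forall>i\<ge>m. \<xi> i = 0" "\<forall>i\<ge>m. \<eta> i = 0" using assms(2,3) pq by (auto simp: indices_def)
  from assms(4) pq have s: "sum \<xi> {..<m} = sum \<eta> {..<m}" and hg: "h = g"
    and mp: "map \<xi> [0..<m-1] = map \<eta> [0..<m-1]" by (auto simp: idx_key_def)
  from mp have lo: "\<forall>j<m-1. \<xi> j = \<eta> j" by (simp add: map_eq_conv)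
  have mm: "{..<m} = insert (m-1) {..<m-1}" using assms(1) by auto
  have "sum \<xi> {..<m-1} = sum \<eta> {..<m-1}" using lo by (intro sum.cong) auto
  with s have "\<xi> (m-1) = \<eta> (m-1)" unfolding mm by simp
  note last = this
  have "\<xi> = \<eta>"
  proof
    fix j
    consider "j < m - 1" | "j = m - 1" | "j \<ge> m" using assms(1) by linarith
    then show "\<xi> j = \<eta> j"
    proof cases
      case 1 then show ?thesis using lo by blast
    next
      case 2 then show ?thesis using last by simp
    next
      case 3 then show ?thesis using z by simp
    qed
  qed
  with hg pq show ?thesis by simp
qed

lemma idx_total:
  assumes "m > 0" "p \<in> indices m n" "q \<in> indices m n"
  shows "idx_lt m p q \<or> p = q \<or> idx_lt m q p"
proof -
  have "\<forall>a b. (a,b) \<in> {(x::nat,y). x<y} \<or> a = b \<or> (b,a) \<in> {(x::nat,y). x<y}" by auto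
  from lexord_linear[OF this, of "idx_key m p" "idx_key m q"] key_inj[OF assms]
  show ?thesis unfolding idx_lt_def by auto
qed

lemma sum_add_eps: "i < m \<Longrightarrow> sum (add_eps \<sigma> i) {..<m} = sum \<sigma> {..<m} + 1"
proof -
  assume i: "i < m"
  have "add_eps \<sigma> i = (\<lambda>j. \<sigma> j + (if j = i then 1 else 0))"
    by (auto simp: add_eps_def)
  then show ?thesis using i by (simp add: sum.distrib)
qed

lemma lex_map_iff:
  "(map f [0..<N], map g [0..<N]) \<in> lexord {(x::nat, y). x < y} \<longleftrightarrow>
   (\<exists>j<N. (\<forall>l<j. f l = g l) \<and> f j < g j)"
  by (auto simp: lexord_take_index_conv take_map map_eq_conv)

lemma idx_lt_eps: "i < m \<Longrightarrow> idx_lt m (\<sigma>, k) (add_eps \<sigma> i, k)"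
  by (simp add: idx_lt_def idx_key_def sum_add_eps)

lemma idx_lt_mono_eps:
  assumes "i < m" "idx_lt m (\<xi>, h) (\<sigma>, k)"
  shows "idx_lt m (add_eps \<xi> i, h) (add_eps \<sigma> i, k)"
proof -
  have t: "(map (add_eps \<xi> i) [0..<m-1], map (add_eps \<sigma> i) [0..<m-1]) \<in> lexord {(x::nat, y). x < y}"
    if "(map \<xi> [0..<m-1], map \<sigma> [0..<m-1]) \<in> lexord {(x::nat, y). x < y}"
    using that unfolding lex_map_iff by (auto simp: add_eps_def)
  from assms show ?thesis
    unfolding idx_lt_def idx_key_def using t by (auto simp: sum_add_eps)
qed

lemma add_eps_indices: "i < m \<Longrightarrow> (\<sigma>, k) \<in> indices m n \<Longrightarrow> (add_eps \<sigma> i, k) \<in> indices m n"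
  by (auto simp: indices_def add_eps_def)


lemma sf_0: "is_subfield F \<Longrightarrow> 0 \<in> F" by (simp add: is_subfield_def)
lemma sf_1: "is_subfield F \<Longrightarrow> 1 \<in> F" by (simp add: is_subfield_def)
lemma sf_add: "is_subfield F \<Longrightarrow> x \<in> F \<Longrightarrow> y \<in> F \<Longrightarrow> x + y \<in> F" by (simp add: is_subfield_def)
lemma sf_diff: "is_subfield F \<Longrightarrow> x \<in> F \<Longrightarrow> y \<in> F \<Longrightarrow> x - y \<in> F" by (simp add: is_subfield_def)
lemma sf_mult: "is_subfield F \<Longrightarrow> x \<in> F \<Longrightarrow> y \<in> F \<Longrightarrow> x * y \<in> F" by (simp add: is_subfield_def)
lemma sf_inverse: "is_subfield F \<Longrightarrow> x \<in> F \<Longrightarrow> inverse x \<in> F" by (simp add: is_subfield_def)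
lemma sf_neg: "is_subfield F \<Longrightarrow> x \<in> F \<Longrightarrow> - x \<in> F"
  using sf_diff[of F 0 x] sf_0[of F] by simp
lemma sf_divide: "is_subfield F \<Longrightarrow> x \<in> F \<Longrightarrow> y \<in> F \<Longrightarrow> x / y \<in> F"
  by (simp add: divide_inverse sf_mult sf_inverse)
lemma sf_power: "is_subfield F \<Longrightarrow> x \<in> F \<Longrightarrow> x ^ k \<in> F"
  by (induction k) (auto intro: sf_mult sf_1)
lemma sf_of_nat: "is_subfield F \<Longrightarrow> of_nat k \<in> F"
  by (induction k) (auto intro: sf_add sf_1 sf_0)
lemma sf_sum_list: "is_subfield F \<Longrightarrow> (\<And>x. x \<in> set xs \<Longrightarrow> f x \<in> F) \<Longrightarrow> sum_list (map f xs) \<in> F"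
  by (induction xs) (auto intro: sf_add sf_0)
lemma sf_sum: "is_subfield F \<Longrightarrow> (\<And>x. x \<in> A \<Longrightarrow> f x \<in> F) \<Longrightarrow> sum f A \<in> F"
  by (induction A rule: infinite_finite_induct) (auto intro: sf_add sf_0)
lemma sf_prod: "is_subfield F \<Longrightarrow> (\<And>x. x \<in> A \<Longrightarrow> f x \<in> F) \<Longrightarrow> prod f A \<in> F"
  by (induction A rule: infinite_finite_induct) (auto intro: sf_mult sf_1)

lemma field_gen_subfield: "is_subfield (field_gen K S)"
  unfolding field_gen_def is_subfield_def by auto
lemma field_gen_least: "is_subfield F \<Longrightarrow> K \<subseteq> F \<Longrightarrow> S \<subseteq> F \<Longrightarrow> field_gen K S \<subseteq> F"
  unfolding field_gen_def by auto
lemma field_gen_K: "K \<subseteq> field_gen K S"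
  unfolding field_gen_def by auto
lemma field_gen_S: "S \<subseteq> field_gen K S"
  unfolding field_gen_def by auto
lemma field_gen_mono: "S \<subseteq> T \<Longrightarrow> field_gen K S \<subseteq> field_gen K T"
  unfolding field_gen_def by auto

lemma der_add: "is_derivation K L dd \<Longrightarrow> x \<in> K \<Longrightarrow> y \<in> K \<Longrightarrow> dd (x + y) = dd x + dd y"
  by (simp add: is_derivation_def)
lemma der_mult: "is_derivation K L dd \<Longrightarrow> x \<in> K \<Longrightarrow> y \<in> K \<Longrightarrow> dd (x * y) = x * dd y + dd x * y"
  by (simp add: is_derivation_def)
lemma der_0: "is_derivation K L dd \<Longrightarrow> is_subfield K \<Longrightarrow> dd 0 = 0"
proof -
  assume a: "is_derivation K L dd" "is_subfield K"
  have "dd (0 + 0) = dd 0 + dd 0" using der_add[OF a(1), of 0 0] sf_0[OF a(2)] by blast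
  then show ?thesis by (metis add_0_right add_left_cancel)
qed
lemma der_1: "is_derivation K L dd \<Longrightarrow> is_subfield K \<Longrightarrow> dd 1 = 0"
proof -
  assume a: "is_derivation K L dd" "is_subfield K"
  have "dd (1 * 1) = 1 * dd 1 + dd 1 * 1" using der_mult[OF a(1), of 1 1] sf_1[OF a(2)] by blast
  then have "dd 1 + 0 = dd 1 + dd 1" by simp
  then show ?thesis by (metis add_left_cancel)
qed
lemma der_neg: "is_derivation K L dd \<Longrightarrow> is_subfield K \<Longrightarrow> x \<in> K \<Longrightarrow> dd (- x) = - dd x"
  using der_add[of K L dd x "-x"] sf_neg[of K x] der_0[of K L dd]
  by (metis add.right_inverse add_left_cancel)
lemma der_sum_list: "is_derivation K L dd \<Longrightarrow> is_subfield K \<Longrightarrow> (\<And>x. x \<in> set xs \<Longrightarrow> f x \<in> K) \<Longrightarrow>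
   dd (sum_list (map f xs)) = sum_list (map (\<lambda>x. dd (f x)) xs)"
  by (induction xs) (auto simp: der_0 der_add sf_sum_list)

definition leval :: "(idx \<Rightarrow> 'a::field) \<Rightarrow> ('a \<times> monom) list \<Rightarrow> 'a" where
  "leval a L = sum_list (map (\<lambda>(c, M). c * mono_eval M a) L)"

definition mdelta :: "(idx \<Rightarrow> 'a::field) \<Rightarrow> (idx \<Rightarrow> 'a) \<Rightarrow> monom \<Rightarrow> 'a" where
  "mdelta a e M = (\<Sum>w\<in>{v. M v \<noteq> 0}. of_nat (M w) * mono_eval (M(w := M w - 1)) a * e w)"

definition lder :: "('a \<Rightarrow> 'a) \<Rightarrow> (idx \<Rightarrow> 'a::field) \<Rightarrow> (idx \<Rightarrow> 'a) \<Rightarrow> ('a \<times> monom) list \<Rightarrow> 'a" where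
  "lder dd a e L = sum_list (map (\<lambda>(c, M). dd c * mono_eval M a + c * mdelta a e M) L)"

definition lvalid :: "'a set \<Rightarrow> idx set \<Rightarrow> ('a \<times> monom) list \<Rightarrow> bool" where
  "lvalid K U L \<longleftrightarrow> (\<forall>(c, M)\<in>set L. c \<in> K \<and> finite {v. M v \<noteq> 0} \<and> {v. M v \<noteq> 0} \<subseteq> U)"

fun lmul :: "('a::field \<times> monom) list \<Rightarrow> ('a \<times> monom) list \<Rightarrow> ('a \<times> monom) list" where
  "lmul [] L2 = []"
| "lmul (p # L1) L2 = map (\<lambda>(c2, M2). (fst p * c2, \<lambda>v. snd p v + M2 v)) L2 @ lmul L1 L2"

definition lneg :: "('a::field \<times> monom) list \<Rightarrow> ('a \<times> monom) list" where
  "lneg L = map (\<lambda>(c, M). (- c, M)) L"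

definition lconst :: "'a::field \<Rightarrow> ('a \<times> monom) list" where
  "lconst c = [(c, \<lambda>_. 0)]"

definition lvar :: "idx \<Rightarrow> ('a::field \<times> monom) list" where
  "lvar v = [(1, (\<lambda>_. 0)(v := 1))]"

lemma mono_eval_superset:
  "finite S \<Longrightarrow> {v. M v \<noteq> 0} \<subseteq> S \<Longrightarrow> mono_eval M a = (\<Prod>v\<in>S. a v ^ M v)"
  unfolding mono_eval_def by (rule prod.mono_neutral_left) auto

lemma mdelta_superset:
  "finite S \<Longrightarrow> {v. M v \<noteq> 0} \<subseteq> S \<Longrightarrow>
   mdelta a e M = (\<Sum>w\<in>S. of_nat (M w) * mono_eval (M(w := M w - 1)) a * e w)"
  unfolding mdelta_def by (rule sum.mono_neutral_left) auto

lemma mono_eval_add: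
  assumes "finite {v. M1 v \<noteq> 0}" "finite {v. M2 v \<noteq> 0}"
  shows "mono_eval (\<lambda>v. M1 v + M2 v) a = mono_eval M1 a * mono_eval M2 a"
proof -
  let ?S = "{v. M1 v \<noteq> 0} \<union> {v. M2 v \<noteq> 0}"
  have f: "finite ?S" using assms by simp
  have "mono_eval (\<lambda>v. M1 v + M2 v) a = (\<Prod>v\<in>?S. a v ^ (M1 v + M2 v))"
    by (rule mono_eval_superset[OF f]) auto
  also have "\<dots> = (\<Prod>v\<in>?S. a v ^ M1 v) * (\<Prod>v\<in>?S. a v ^ M2 v)"
    by (simp add: power_add prod.distrib)
  also have "\<dots> = mono_eval M1 a * mono_eval M2 a"
    using mono_eval_superset[OF f, of M1 a] mono_eval_superset[OF f, of M2 a] by auto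
  finally show ?thesis .
qed

lemma mdelta_add:
  assumes f1: "finite {v. M1 v \<noteq> 0}" and f2: "finite {v. M2 v \<noteq> 0}"
  shows "mdelta a e (\<lambda>v. M1 v + M2 v) = mono_eval M1 a * mdelta a e M2 + mdelta a e M1 * mono_eval M2 a"
proof -
  let ?S = "{v. M1 v \<noteq> 0} \<union> {v. M2 v \<noteq> 0}"
  have f: "finite ?S" using assms by simp
  have fin1: "finite {v. (M1(w := M1 w - 1)) v \<noteq> 0}" for w
    by (rule finite_subset[OF _ f1]) auto
  have fin2: "finite {v. (M2(w := M2 w - 1)) v \<noteq> 0}" for w
    by (rule finite_subset[OF _ f2]) auto
  have pt: "of_nat (M1 w + M2 w) * mono_eval ((\<lambda>v. M1 v + M2 v)(w := M1 w + M2 w - 1)) a * e w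
      = mono_eval M1 a * (of_nat (M2 w) * mono_eval (M2(w := M2 w - 1)) a * e w)
        + of_nat (M1 w) * mono_eval (M1(w := M1 w - 1)) a * e w * mono_eval M2 a" for w
  proof -
    have A: "of_nat (M1 w) * mono_eval ((\<lambda>v. M1 v + M2 v)(w := M1 w + M2 w - 1)) a
        = of_nat (M1 w) * mono_eval (M1(w := M1 w - 1)) a * mono_eval M2 a"
    proof (cases "M1 w = 0")
      case False
      then have "(\<lambda>v. M1 v + M2 v)(w := M1 w + M2 w - 1) = (\<lambda>v. (M1(w := M1 w - 1)) v + M2 v)"
        by auto
      then show ?thesis using mono_eval_add[OF fin1[of w] f2, of a] by (simp only: mult.assoc)
    qed simp
    have B: "of_nat (M2 w) * mono_eval ((\<lambda>v. M1 v + M2 v)(w := M1 w + M2 w - 1)) a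
        = of_nat (M2 w) * mono_eval M1 a * mono_eval (M2(w := M2 w - 1)) a"
    proof (cases "M2 w = 0")
      case False
      then have "(\<lambda>v. M1 v + M2 v)(w := M1 w + M2 w - 1) = (\<lambda>v. M1 v + (M2(w := M2 w - 1)) v)"
        by auto
      then show ?thesis using mono_eval_add[OF f1 fin2[of w], of a] by (simp only: mult.assoc)
    qed simp
    let ?X = "mono_eval ((\<lambda>v. M1 v + M2 v)(w := M1 w + M2 w - 1)) a"
    have "of_nat (M1 w + M2 w) * ?X * e w = (of_nat (M1 w) * ?X + of_nat (M2 w) * ?X) * e w"
      by (simp only: of_nat_add distrib_right)
    also have "\<dots> = (of_nat (M1 w) * mono_eval (M1(w := M1 w - 1)) a * mono_eval M2 a
       + of_nat (M2 w) * mono_eval M1 a * mono_eval (M2(w := M2 w - 1)) a) * e w"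
      by (simp only: A B)
    also have "\<dots> = mono_eval M1 a * (of_nat (M2 w) * mono_eval (M2(w := M2 w - 1)) a * e w)
        + of_nat (M1 w) * mono_eval (M1(w := M1 w - 1)) a * e w * mono_eval M2 a"
      by (simp add: algebra_simps)
    finally show ?thesis .
  qed
  have "mdelta a e (\<lambda>v. M1 v + M2 v) = (\<Sum>w\<in>?S. of_nat (M1 w + M2 w) *
      mono_eval ((\<lambda>v. M1 v + M2 v)(w := M1 w + M2 w - 1)) a * e w)"
    by (rule mdelta_superset[OF f]) auto
  also have "\<dots> = mono_eval M1 a * (\<Sum>w\<in>?S. of_nat (M2 w) * mono_eval (M2(w := M2 w - 1)) a * e w)
      + (\<Sum>w\<in>?S. of_nat (M1 w) * mono_eval (M1(w := M1 w - 1)) a * e w) * mono_eval M2 a"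
    unfolding sum_distrib_left sum_distrib_right sum.distrib[symmetric]
    by (rule sum.cong) (rule refl, rule pt)
  also have "\<dots> = mono_eval M1 a * mdelta a e M2 + mdelta a e M1 * mono_eval M2 a"
    using mdelta_superset[OF f, of M1 a e] mdelta_superset[OF f, of M2 a e] by auto
  finally show ?thesis .
qed


lemma leval_append[simp]: "leval a (L1 @ L2) = leval a L1 + leval a L2"
  by (simp add: leval_def)
lemma lder_append[simp]: "lder dd a e (L1 @ L2) = lder dd a e L1 + lder dd a e L2"
  by (simp add: lder_def)
lemma leval_Nil[simp]: "leval a [] = 0" by (simp add: leval_def)
lemma lder_Nil[simp]: "lder dd a e [] = 0" by (simp add: lder_def)
lemma leval_Cons: "leval a ((c, M) # L) = c * mono_eval M a + leval a L"
  by (simp add: leval_def)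
lemma lder_Cons: "lder dd a e ((c, M) # L) = dd c * mono_eval M a + c * mdelta a e M + lder dd a e L"
  by (simp add: lder_def)
lemma lvalid_append[simp]: "lvalid K U (L1 @ L2) \<longleftrightarrow> lvalid K U L1 \<and> lvalid K U L2"
  by (auto simp: lvalid_def)
lemma lvalid_Cons: "lvalid K U ((c, M) # L) \<longleftrightarrow> c \<in> K \<and> finite {v. M v \<noteq> 0} \<and> {v. M v \<noteq> 0} \<subseteq> U \<and> lvalid K U L"
  by (auto simp: lvalid_def)
lemma lvalidD: "lvalid K U L \<Longrightarrow> (c, M) \<in> set L \<Longrightarrow> c \<in> K \<and> finite {v. M v \<noteq> 0} \<and> {v. M v \<noteq> 0} \<subseteq> U"
  unfolding lvalid_def by fastforce
lemma lvalidI: "(\<And>c M. (c, M) \<in> set L \<Longrightarrow> c \<in> K \<and> finite {v. M v \<noteq> 0} \<and> {v. M v \<noteq> 0} \<subseteq> U) \<Longrightarrow> lvalid K U L"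
  unfolding lvalid_def by fastforce
lemma lvalid_mono: "U \<subseteq> U' \<Longrightarrow> lvalid K U L \<Longrightarrow> lvalid K U' L"
proof (rule lvalidI)
  fix c M assume "U \<subseteq> U'" "lvalid K U L" "(c, M) \<in> set L"
  then show "c \<in> K \<and> finite {v. M v \<noteq> 0} \<and> {v. M v \<noteq> 0} \<subseteq> U'"
    using lvalidD[of K U L c M] by blast
qed

lemma leval_lneg: "leval a (lneg L) = - leval a L"
  by (induction L) (auto simp: lneg_def leval_def)

lemma lder_lneg:
  assumes "is_derivation K K dd" "is_subfield K" "lvalid K U L"
  shows "lder dd a e (lneg L) = - lder dd a e L"
  using assms(3)
proof (induction L)
  case (Cons p L)
  obtain c M where p: "p = (c, M)" by (cases p)
  from Cons.prems p have cK: "c \<in> K" and v: "lvalid K U L" by (auto simp: lvalid_Cons)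
  have "lneg (p # L) = (- c, M) # lneg L" by (simp add: lneg_def p)
  then show ?case using Cons.IH[OF v] der_neg[OF assms(1,2) cK] p
    by (simp add: lder_Cons)
qed (simp add: lneg_def)

lemma lvalid_lneg: "is_subfield K \<Longrightarrow> lvalid K U L \<Longrightarrow> lvalid K U (lneg L)"
  by (auto simp: lvalid_def lneg_def intro: sf_neg)

lemma leval_map_mul:
  assumes "lvalid K U L2" "finite {v. M v \<noteq> 0}"
  shows "leval a (map (\<lambda>(c2, M2). (c * c2, \<lambda>v. M v + M2 v)) L2) = c * mono_eval M a * leval a L2"
  using assms(1)
proof (induction L2)
  case (Cons p L)
  obtain c2 M2 where p: "p = (c2, M2)" by (cases p)
  from Cons.prems p have f2: "finite {v. M2 v \<noteq> 0}" and v: "lvalid K U L" by (auto simp: lvalid_Cons)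
  show ?case using Cons.IH[OF v] mono_eval_add[OF assms(2) f2, of a] p
    by (simp add: leval_Cons algebra_simps)
qed simp

lemma lder_map_mul:
  assumes d: "is_derivation K K dd" and K: "is_subfield K"
    and "lvalid K U L2" "finite {v. M v \<noteq> 0}" "c \<in> K"
  shows "lder dd a e (map (\<lambda>(c2, M2). (c * c2, \<lambda>v. M v + M2 v)) L2)
     = c * mono_eval M a * lder dd a e L2 + (dd c * mono_eval M a + c * mdelta a e M) * leval a L2"
  using assms(3)
proof (induction L2)
  case (Cons p L)
  obtain c2 M2 where p: "p = (c2, M2)" by (cases p)
  from Cons.prems p have f2: "finite {v. M2 v \<noteq> 0}" and v: "lvalid K U L" and c2: "c2 \<in> K"
    by (auto simp: lvalid_Cons)
  show ?case using Cons.IH[OF v] mono_eval_add[OF assms(4) f2, of a] mdelta_add[OF assms(4) f2, of a e]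
      der_mult[OF d assms(5) c2] p
    by (simp add: leval_Cons lder_Cons algebra_simps)
qed simp

lemma lvalid_lmul:
  assumes "is_subfield K" "lvalid K U L1" "lvalid K U L2"
  shows "lvalid K U (lmul L1 L2)"
  using assms(2)
proof (induction L1)
  case (Cons p L)
  obtain c M where p: "p = (c, M)" by (cases p)
  from Cons.prems p have f: "finite {v. M v \<noteq> 0}" "{v. M v \<noteq> 0} \<subseteq> U" and v: "lvalid K U L" and c: "c \<in> K"
    by (auto simp: lvalid_Cons)
  have "lvalid K U (map (\<lambda>(c2, M2). (c * c2, \<lambda>v. M v + M2 v)) L2)"
    using assms(3) f c unfolding lvalid_def
    by (auto intro: sf_mult[OF assms(1)] finite_subset[of _ "{v. M v \<noteq> 0} \<union> _"])
  then show ?case using Cons.IH[OF v] p by simp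
qed simp

lemma leval_lmul:
  assumes "lvalid K U L1" "lvalid K U L2"
  shows "leval a (lmul L1 L2) = leval a L1 * leval a L2"
  using assms(1)
proof (induction L1)
  case (Cons p L)
  obtain c M where p: "p = (c, M)" by (cases p)
  from Cons.prems p have f: "finite {v. M v \<noteq> 0}" and v: "lvalid K U L"
    by (auto simp: lvalid_Cons)
  show ?case using Cons.IH[OF v] leval_map_mul[OF assms(2) f, of a c] p
    by (simp add: leval_Cons algebra_simps)
qed simp

lemma lder_lmul:
  assumes d: "is_derivation K K dd" and K: "is_subfield K" and "lvalid K U L1" "lvalid K U L2"
  shows "lder dd a e (lmul L1 L2) = leval a L1 * lder dd a e L2 + lder dd a e L1 * leval a L2"
  using assms(3)
proof (induction L1)
  case (Cons p L)
  obtain c M where p: "p = (c, M)" by (cases p)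
  from Cons.prems p have f: "finite {v. M v \<noteq> 0}" and v: "lvalid K U L" and c: "c \<in> K"
    by (auto simp: lvalid_Cons)
  show ?case using Cons.IH[OF v] lder_map_mul[OF d K assms(4) f c, of a e] p
    by (simp add: leval_Cons lder_Cons algebra_simps)
qed simp

lemma mono_eval_zero[simp]: "mono_eval (\<lambda>_. 0) a = 1"
  by (simp add: mono_eval_def)
lemma mdelta_zero[simp]: "mdelta a e (\<lambda>_. 0) = 0"
  by (simp add: mdelta_def)

lemma leval_lconst[simp]: "leval a (lconst c) = c"
  by (simp add: lconst_def leval_def)
lemma lder_lconst[simp]: "lder dd a e (lconst c) = dd c"
  by (simp add: lconst_def lder_def)
lemma lvalid_lconst: "c \<in> K \<Longrightarrow> lvalid K U (lconst c)"
  by (simp add: lconst_def lvalid_def)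

lemma supp_single: "{w. ((\<lambda>_. 0)(v := (1::nat))) w \<noteq> 0} = {v}"
  by auto

lemma leval_lvar[simp]: "leval a (lvar v) = a v"
  by (simp add: lvar_def leval_def mono_eval_def supp_single)
lemma lder_lvar:
  "is_derivation K K dd \<Longrightarrow> is_subfield K \<Longrightarrow> lder dd a e (lvar v) = e v"
  by (simp add: lvar_def lder_def mono_eval_def mdelta_def supp_single der_1)
lemma lvalid_lvar: "is_subfield K \<Longrightarrow> v \<in> U \<Longrightarrow> lvalid K U (lvar v)"
  by (simp add: lvar_def lvalid_def supp_single sf_1)

lemma mono_eval_in:
  assumes "is_subfield F" "{v. M v \<noteq> 0} \<subseteq> U" "a ` U \<subseteq> F"
  shows "mono_eval M a \<in> F"
  unfolding mono_eval_def
proof (rule sf_prod[OF assms(1)])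
  fix v assume "v \<in> {v. M v \<noteq> 0}"
  then have "v \<in> U" using assms(2) by blast
  then have "a v \<in> F" using assms(3) by blast
  then show "a v ^ M v \<in> F" by (rule sf_power[OF assms(1)])
qed

lemma mdelta_in:
  assumes "is_subfield F" "{v. M v \<noteq> 0} \<subseteq> U" "a ` U \<subseteq> F" "e ` U \<subseteq> F"
  shows "mdelta a e M \<in> F"
  unfolding mdelta_def
proof (rule sf_sum[OF assms(1)])
  fix w assume w: "w \<in> {v. M v \<noteq> 0}"
  have "{v. (M(w := M w - 1)) v \<noteq> 0} \<subseteq> {v. M v \<noteq> 0}" by auto
  then have "{v. (M(w := M w - 1)) v \<noteq> 0} \<subseteq> U" using assms(2) by (rule subset_trans)
  then have "mono_eval (M(w := M w - 1)) a \<in> F" using mono_eval_in[OF assms(1) _ assms(3)] by blast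
  moreover have "e w \<in> F" using w assms(2,4) by auto
  ultimately show "of_nat (M w) * mono_eval (M(w := M w - 1)) a * e w \<in> F"
    by (intro sf_mult[OF assms(1)] sf_of_nat[OF assms(1)])
qed

lemma leval_in:
  assumes "is_subfield F" "K \<subseteq> F" "a ` U \<subseteq> F" "lvalid K U L"
  shows "leval a L \<in> F"
  unfolding leval_def
proof (rule sf_sum_list[OF assms(1)])
  fix x assume x: "x \<in> set L"
  obtain c M where p: "x = (c, M)" by (cases x)
  from lvalidD[OF assms(4) x[unfolded p]] have "c \<in> F" "mono_eval M a \<in> F"
    using assms(2) mono_eval_in[OF assms(1) _ assms(3)] by auto
  then show "(case x of (c, M) \<Rightarrow> c * mono_eval M a) \<in> F" using p sf_mult[OF assms(1)] by simp
qed

lemma lder_in: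
  assumes "is_subfield F" "K \<subseteq> F" "a ` U \<subseteq> F" "e ` U \<subseteq> F" "\<forall>x\<in>K. dd x \<in> F" "lvalid K U L"
  shows "lder dd a e L \<in> F"
  unfolding lder_def
proof (rule sf_sum_list[OF assms(1)])
  fix x assume x: "x \<in> set L"
  obtain c M where p: "x = (c, M)" by (cases x)
  from lvalidD[OF assms(6) x[unfolded p]] have "c \<in> F" "dd c \<in> F" "mono_eval M a \<in> F" "mdelta a e M \<in> F"
    using assms(2,5) mono_eval_in[OF assms(1) _ assms(3)] mdelta_in[OF assms(1) _ assms(3,4)] by auto
  then show "(case x of (c, M) \<Rightarrow> dd c * mono_eval M a + c * mdelta a e M) \<in> F"
    using p sf_mult[OF assms(1)] sf_add[OF assms(1)] by simp
qed


lemma idx_max_exists: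
  assumes "m > 0" "finite S" "S \<noteq> {}" "S \<subseteq> indices m n"
  shows "\<exists>q\<in>S. \<forall>p\<in>S. idx_le m p q"
  using assms(2,3,4)
proof (induction S rule: finite_ne_induct)
  case (singleton x) then show ?case by (simp add: idx_le_refl)
next
  case (insert x F)
  then obtain q where q: "q \<in> F" "\<forall>p\<in>F. idx_le m p q" by auto
  have xi: "x \<in> indices m n" "q \<in> indices m n" using insert.prems q by auto
  show ?case
  proof (cases "idx_lt m q x")
    case True
    then have "\<forall>p\<in>insert x F. idx_le m p x"
      using q(2) idx_le_lt_trans idx_lt_imp_le idx_le_refl by blast
    then show ?thesis by blast
  next
    case False
    then have "idx_le m x q" using idx_total[OF assms(1) xi] by (auto simp: idx_le_refl idx_lt_imp_le)
    then show ?thesis using q by blast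
  qed
qed

lemma idx_le_sum: "idx_le m (\<xi>, h) (\<sigma>, k) \<Longrightarrow> sum \<xi> {..<m} \<le> sum \<sigma> {..<m}"
  unfolding idx_le_def idx_lt_def idx_key_def by auto

lemma finite_below:
  "finite {p \<in> indices m n. idx_le m p (\<sigma>, k)}"
proof -
  let ?S = "sum \<sigma> {..<m}"
  let ?F = "{\<xi>. \<forall>j. (j \<in> {..<m} \<longrightarrow> \<xi> j \<in> {..?S}) \<and> (j \<notin> {..<m} \<longrightarrow> \<xi> j = 0)}"
  have "finite ?F" by (rule finite_set_of_finite_funs) auto
  then have fin: "finite (?F \<times> {..<n})" by simp
  have "{p \<in> indices m n. idx_le m p (\<sigma>, k)} \<subseteq> ?F \<times> {..<n}"
  proof
    fix p assume p: "p \<in> {p \<in> indices m n. idx_le m p (\<sigma>, k)}"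
    obtain \<xi> h where ph: "p = (\<xi>, h)" by (cases p)
    from p ph have ind: "\<forall>i\<ge>m. \<xi> i = 0" "h < n" and le: "idx_le m (\<xi>, h) (\<sigma>, k)"
      by (auto simp: indices_def)
    have "\<xi> j \<le> ?S" if "j < m" for j
    proof -
      have "\<xi> j \<le> sum \<xi> {..<m}" using that by (intro member_le_sum) auto
      also have "\<dots> \<le> ?S" by (rule idx_le_sum[OF le])
      finally show ?thesis .
    qed
    then show "p \<in> ?F \<times> {..<n}" using ind ph by auto
  qed
  then show ?thesis using fin finite_subset by blast
qed

lemma regroup:
  fixes g :: "monom \<Rightarrow> 'b::field" and h :: "'c \<Rightarrow> 'b"
  assumes "finite S" "snd ` set L \<subseteq> S"
  shows "(\<Sum>M\<in>S. sum_list (map (\<lambda>(c, M'). if M' = M then h c else 0) L) * g M)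
       = sum_list (map (\<lambda>(c, M). h c * g M) L)"
  using assms(2)
proof (induction L)
  case Nil then show ?case by simp
next
  case (Cons p L)
  obtain c M0 where p: "p = (c, M0)" by (cases p)
  have M0: "M0 \<in> S" using Cons.prems p by auto
  have A: "(\<Sum>M\<in>S. sum_list (map (\<lambda>(c, M'). if M' = M then h c else 0) (p # L)) * g M)
      = (\<Sum>M\<in>S. (if M0 = M then h c else 0) * g M) +
        (\<Sum>M\<in>S. sum_list (map (\<lambda>(c, M'). if M' = M then h c else 0) L) * g M)"
    unfolding sum.distrib[symmetric] by (rule sum.cong) (simp_all add: p distrib_right)
  have B: "(\<Sum>M\<in>S. (if M0 = M then h c else 0) * g M) = h c * g M0"
  proof -
    have eq: "(\<lambda>M. (if M0 = M then h c else 0) * g M) = (\<lambda>M. if M0 = M then h c * g M else 0)"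
      by auto
    show ?thesis unfolding eq using M0 assms(1) by simp
  qed
  have C: "(\<Sum>M\<in>S. sum_list (map (\<lambda>(c, M'). if M' = M then h c else 0) L) * g M)
      = sum_list (map (\<lambda>(c, M). h c * g M) L)"
    using Cons.IH Cons.prems by simp
  show ?case unfolding A B C by (simp add: p)
qed

lemma lder_split: "lder dd a e L = sum_list (map (\<lambda>(c, M). dd c * mono_eval M a) L)
   + sum_list (map (\<lambda>(c, M). c * mdelta a e M) L)"
  by (induction L) (auto simp: lder_Cons)

lemma lder_const_case:
  assumes "is_derivation K K dd" "is_subfield K"
    and "\<forall>(c, M)\<in>set L. M = (\<lambda>_. 0) \<and> c \<in> K"
  shows "lder dd a e L = dd (leval a L) \<and> leval a L \<in> K"
  using assms(3)
proof (induction L)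
  case Nil then show ?case using der_0[OF assms(1,2)] sf_0[OF assms(2)] by simp
next
  case (Cons p L)
  obtain c M where p: "p = (c, M)" by (cases p)
  from Cons.prems p have M: "M = (\<lambda>_. 0)" and c: "c \<in> K" and r: "\<forall>(c, M)\<in>set L. M = (\<lambda>_. 0) \<and> c \<in> K"
    by auto
  from Cons.IH[OF r] have ih: "lder dd a e L = dd (leval a L)" "leval a L \<in> K" by auto
  show ?case using p M c ih der_add[OF assms(1) c ih(2)] sf_add[OF assms(2) c ih(2)]
    by (simp add: leval_Cons lder_Cons)
qed


lemma sum_list_zero': "(\<forall>x\<in>set L. \<phi> x = 0) \<Longrightarrow> sum_list (map \<phi> L) = (0::'b::comm_monoid_add)"
  by (induction L) auto

lemma lder_zero:
  fixes a :: "idx \<Rightarrow> 'a::field"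
  assumes m: "m > 0" and K: "is_subfield K" and dd: "is_derivation K K (d i)" and i: "i < m"
    and dc: "differential_condition m n K d a b"
    and v: "lvalid K {(\<xi>, h) \<in> indices m n. idx_lt_bnd m (add_eps \<xi> i, h) b} L"
    and z: "leval a L = 0"
  shows "lder (d i) a (\<lambda>w. a (add_eps (fst w) i, snd w)) L = 0"
proof -
  let ?V = "{(\<xi>, h) \<in> indices m n. idx_lt_bnd m (add_eps \<xi> i, h) b}"
  let ?e = "\<lambda>w. a (add_eps (fst w) i, snd w)"
  define vars where "vars = (\<Union>x\<in>set L. {v. snd x v \<noteq> 0})"
  have varsV: "vars \<subseteq> ?V"
  proof
    fix w assume "w \<in> vars"
    then obtain c M where "(c, M) \<in> set L" "M w \<noteq> 0" unfolding vars_def by auto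
    with lvalidD[OF v this(1)] show "w \<in> ?V" by blast
  qed
  have finvars: "finite vars"
    unfolding vars_def
  proof (rule finite_UN_I)
    fix x assume x: "x \<in> set L"
    obtain c M where "x = (c, M)" by (cases x)
    with lvalidD[OF v, of c M] x show "finite {v. snd x v \<noteq> 0}" by auto
  qed simp
  show ?thesis
  proof (cases "vars = {}")
    case True
    have "\<forall>(c, M)\<in>set L. M = (\<lambda>_. 0) \<and> c \<in> K"
    proof (intro ballI, clarify)
      fix c M assume cM: "(c, M) \<in> set L"
      have "M = (\<lambda>_. 0)"
      proof
        fix w show "M w = 0" using True cM unfolding vars_def by fastforce
      qed
      then show "M = (\<lambda>_. 0) \<and> c \<in> K" using lvalidD[OF v cM] by blast
    qed
    from lder_const_case[OF dd K this] show ?thesis using z der_0[OF dd K] by simp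
  next
    case False
    have "vars \<subseteq> indices m n" using varsV by auto
    from idx_max_exists[OF m finvars False this]
    obtain q where q: "q \<in> vars" "\<forall>p\<in>vars. idx_le m p q" by blast
    obtain \<sigma> k where qs: "q = (\<sigma>, k)" by (cases q)
    have qV: "(\<sigma>, k) \<in> indices m n" "idx_lt_bnd m (add_eps \<sigma> i, k) b"
      using q(1) varsV qs by auto
    define W where "W = {p \<in> indices m n. idx_le m p (\<sigma>, k)}"
    have finW: "finite W" unfolding W_def by (rule finite_below)
    have varsW: "vars \<subseteq> W" using q(2) qs varsV unfolding W_def by auto
    define f where "f = (\<lambda>M. sum_list (map (\<lambda>(c, M'). if M' = M then c else 0) L))"
    define S where "S = snd ` set L"
    have finS: "finite S" unfolding S_def by simp
    have suppf: "{M. f M \<noteq> 0} \<subseteq> S"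
    proof
      fix M assume M: "M \<in> {M. f M \<noteq> 0}"
      show "M \<in> S"
      proof (rule ccontr)
        assume "M \<notin> S"
        then have "\<forall>x\<in>set L. (case x of (c, M') \<Rightarrow> if M' = M then c else 0) = 0"
          unfolding S_def by force
        then have "f M = 0" unfolding f_def by (rule sum_list_zero')
        with M show False by simp
      qed
    qed
    have fK: "f M \<in> K" for M
      unfolding f_def by (rule sf_sum_list[OF K]) (auto dest: lvalidD[OF v] intro: sf_0[OF K])
    have mp: "mpoly_over K W f"
      unfolding mpoly_over_def
    proof (intro conjI allI impI)
      show "finite {M. f M \<noteq> 0}" using finite_subset[OF suppf finS] .
      show "f M \<in> K" for M by (rule fK)
      fix M assume "f M \<noteq> 0"
      then have "M \<in> S" using suppf by blast
      then obtain c where cM: "(c, M) \<in> set L" unfolding S_def by force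
      from lvalidD[OF v cM] show "finite {v. M v \<noteq> 0}" by blast
      have "{v. M v \<noteq> 0} \<subseteq> vars" using cM unfolding vars_def by force
      then show "{v. M v \<noteq> 0} \<subseteq> W" using varsW by blast
    qed
    have ev: "mpoly_eval f a = leval a L"
    proof -
      have "mpoly_eval f a = (\<Sum>M\<in>S. f M * mono_eval M a)"
        unfolding mpoly_eval_def by (rule sum.mono_neutral_left[OF finS suppf]) auto
      also have "\<dots> = leval a L"
        unfolding f_def leval_def using regroup[OF finS, of L "\<lambda>x. x" "\<lambda>M. mono_eval M a"]
        by (simp add: S_def)
      finally show ?thesis .
    qed
    have cond: "(\<Sum>(\<eta>, g)\<in>W. mpoly_pderiv_eval f (\<eta>, g) a * a (add_eps \<eta> i, g))
        + mpoly_coeff_deriv_eval (d i) f a = 0"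
    proof -
      have "mpoly_eval f a = 0" using ev z by simp
      then have pre: "(\<sigma>, k) \<in> indices m n \<and> idx_lt_bnd m (add_eps \<sigma> i, k) b \<and>
         mpoly_over K {p \<in> indices m n. idx_le m p (\<sigma>, k)} f \<and> mpoly_eval f a = 0"
        using qV mp unfolding W_def by blast
      show ?thesis unfolding W_def
        by (rule dc[unfolded differential_condition_def, rule_format, OF i pre])
    qed
    have p1: "(\<Sum>(\<eta>, g)\<in>W. mpoly_pderiv_eval f (\<eta>, g) a * a (add_eps \<eta> i, g))
        = sum_list (map (\<lambda>(c, M). c * mdelta a ?e M) L)"
    proof -
      have "(\<Sum>(\<eta>, g)\<in>W. mpoly_pderiv_eval f (\<eta>, g) a * a (add_eps \<eta> i, g))
          = (\<Sum>w\<in>W. mpoly_pderiv_eval f w a * ?e w)"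
        by (rule sum.cong) auto
      also have "\<dots> = (\<Sum>w\<in>W. \<Sum>M\<in>{M. f M \<noteq> 0}. f M * (of_nat (M w) * mono_eval (M(w := M w - 1)) a * ?e w))"
        unfolding mpoly_pderiv_eval_def sum_distrib_right by (simp add: mult.assoc)
      also have "\<dots> = (\<Sum>M\<in>{M. f M \<noteq> 0}. \<Sum>w\<in>W. f M * (of_nat (M w) * mono_eval (M(w := M w - 1)) a * ?e w))"
        by (rule sum.swap)
      also have "\<dots> = (\<Sum>M\<in>{M. f M \<noteq> 0}. f M * mdelta a ?e M)"
      proof (rule sum.cong[OF refl])
        fix M assume "M \<in> {M. f M \<noteq> 0}"
        then have "{v. M v \<noteq> 0} \<subseteq> W" using mp unfolding mpoly_over_def by blast
        from mdelta_superset[OF finW this, of a ?e]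
        show "(\<Sum>w\<in>W. f M * (of_nat (M w) * mono_eval (M(w := M w - 1)) a * ?e w)) = f M * mdelta a ?e M"
          by (simp add: sum_distrib_left)
      qed
      also have "\<dots> = (\<Sum>M\<in>S. f M * mdelta a ?e M)"
        by (rule sum.mono_neutral_left[OF finS suppf]) auto
      also have "\<dots> = sum_list (map (\<lambda>(c, M). c * mdelta a ?e M) L)"
        unfolding f_def using regroup[OF finS, of L "\<lambda>x. x" "\<lambda>M. mdelta a ?e M"]
        by (simp add: S_def)
      finally show ?thesis .
    qed
    have dfM: "d i (f M) = sum_list (map (\<lambda>(c, M'). if M' = M then d i c else 0) L)" for M
    proof -
      have "d i (f M) = sum_list (map (\<lambda>x. d i (case x of (c, M') \<Rightarrow> if M' = M then c else 0)) L)"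
        unfolding f_def by (rule der_sum_list[OF dd K]) (auto dest: lvalidD[OF v] intro: sf_0[OF K])
      also have "\<dots> = sum_list (map (\<lambda>(c, M'). if M' = M then d i c else 0) L)"
        by (rule arg_cong[where f = sum_list], rule map_cong) (auto simp: der_0[OF dd K])
      finally show ?thesis .
    qed
    have p2: "mpoly_coeff_deriv_eval (d i) f a = sum_list (map (\<lambda>(c, M). d i c * mono_eval M a) L)"
    proof -
      have "mpoly_coeff_deriv_eval (d i) f a = (\<Sum>M\<in>S. d i (f M) * mono_eval M a)"
        unfolding mpoly_coeff_deriv_eval_def
        by (rule sum.mono_neutral_left[OF finS suppf]) (auto simp: der_0[OF dd K])
      also have "\<dots> = sum_list (map (\<lambda>(c, M). d i c * mono_eval M a) L)"
        unfolding dfM using regroup[OF finS, of L "d i" "\<lambda>M. mono_eval M a"]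
        by (simp add: S_def)
      finally show ?thesis .
    qed
    have "lder (d i) a ?e L = mpoly_coeff_deriv_eval (d i) f a +
        (\<Sum>(\<eta>, g)\<in>W. mpoly_pderiv_eval f (\<eta>, g) a * a (add_eps \<eta> i, g))"
      by (simp only: lder_split p1 p2)
    also have "\<dots> = (\<Sum>(\<eta>, g)\<in>W. mpoly_pderiv_eval f (\<eta>, g) a * a (add_eps \<eta> i, g))
        + mpoly_coeff_deriv_eval (d i) f a" by (rule add.commute)
    also have "\<dots> = 0" by (rule cond)
    finally show ?thesis .
  qed
qed


definition lrep :: "'a::field set \<Rightarrow> idx set \<Rightarrow> (idx \<Rightarrow> 'a) \<Rightarrow> 'a \<Rightarrow> ('a \<times> monom) list \<Rightarrow> ('a \<times> monom) list \<Rightarrow> bool" where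
  "lrep K U a x P Q \<longleftrightarrow> lvalid K U P \<and> lvalid K U Q \<and> leval a Q \<noteq> 0 \<and> x = leval a P / leval a Q"

definition dval where
  "dval dd a e P Q = (lder dd a e P * leval a Q - leval a P * lder dd a e Q) / (leval a Q)^2"

lemma alg_add:
  fixes p1 p2 q1 q2 p1' p2' q1' q2' :: "'a::field"
  assumes "q1 \<noteq> 0" "q2 \<noteq> 0"
  shows "((p1*q2' + p1'*q2 + (p2*q1' + p2'*q1)) * (q1*q2) - (p1*q2 + p2*q1) * (q1*q2' + q1'*q2)) / (q1*q2)^2
     = (p1'*q1 - p1*q1')/q1^2 + (p2'*q2 - p2*q2')/q2^2"
  using assms by (simp add: field_simps power2_eq_square)

lemma alg_mul:
  fixes p1 p2 q1 q2 p1' p2' q1' q2' :: "'a::field"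
  assumes "q1 \<noteq> 0" "q2 \<noteq> 0"
  shows "((p1*p2' + p1'*p2)*(q1*q2) - (p1*p2)*(q1*q2' + q1'*q2))/(q1*q2)^2
     = (p1/q1) * ((p2'*q2 - p2*q2')/q2^2) + ((p1'*q1 - p1*q1')/q1^2) * (p2/q2)"
  using assms by (simp add: field_simps power2_eq_square)

lemma alg_wd:
  fixes p1 p2 q1 q2 p1' p2' q1' q2' :: "'a::field"
  assumes "q1 \<noteq> 0" "q2 \<noteq> 0" "p1 / q1 = p2 / q2"
    and "p1*q2' + p1'*q2 + - (p2*q1' + p2'*q1) = 0"
  shows "(p1'*q1 - p1*q1')/q1^2 = (p2'*q2 - p2*q2')/q2^2"
proof -
  define x where "x = p1 / q1"
  have p1: "p1 = x * q1" and p2: "p2 = x * q2" using assms(1,2,3) by (auto simp: x_def field_simps)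
  have l: "(p1'*q1 - p1*q1')/q1^2 = (p1' - x*q1')/q1" using assms(1) by (simp add: p1 field_simps power2_eq_square)
  have r: "(p2'*q2 - p2*q2')/q2^2 = (p2' - x*q2')/q2" using assms(2) by (simp add: p2 field_simps power2_eq_square)
  have "(p1' - x*q1') * q2 = (p2' - x*q2') * q1"
    using assms(4) unfolding p1 p2 by (simp add: algebra_simps)
  then show ?thesis unfolding l r using assms(1,2) by (simp add: field_simps)
qed

lemma rep_exists:
  fixes a :: "idx \<Rightarrow> 'a::field"
  assumes K: "is_subfield K" and x: "x \<in> field_gen K (a ` U)"
  shows "\<exists>P Q. lrep K U a x P Q"
proof -
  define R where "R = {x. \<exists>P Q. lrep K U a x P Q}"
  have c1: "lvalid K U (lconst 1)" by (rule lvalid_lconst[OF sf_1[OF K]])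
  have sub: "is_subfield R"
    unfolding is_subfield_def
  proof (intro conjI ballI)
    show "0 \<in> R" unfolding R_def lrep_def by (rule CollectI, rule exI[of _ "[]"], rule exI[of _ "lconst 1"]) (use c1 in \<open>auto simp: lvalid_def\<close>)
    show "1 \<in> R" unfolding R_def lrep_def by (rule CollectI, rule exI[of _ "lconst 1"], rule exI[of _ "lconst 1"]) (use c1 in \<open>auto\<close>)
    fix x y assume "x \<in> R" "y \<in> R"
    then obtain P1 Q1 P2 Q2 where r1: "lrep K U a x P1 Q1" and r2: "lrep K U a y P2 Q2"
      unfolding R_def by blast
    note v = r1[unfolded lrep_def] r2[unfolded lrep_def]
    have vm: "lvalid K U (lmul A B)" if "lvalid K U A" "lvalid K U B" for A B
      by (rule lvalid_lmul[OF K that])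
    have q: "leval a (lmul Q1 Q2) = leval a Q1 * leval a Q2" by (rule leval_lmul) (use v in blast)+
    have e1: "leval a (lmul P1 Q2) = leval a P1 * leval a Q2" by (rule leval_lmul) (use v in blast)+
    have e2: "leval a (lmul P2 Q1) = leval a P2 * leval a Q1" by (rule leval_lmul) (use v in blast)+
    have e3: "leval a (lmul P1 P2) = leval a P1 * leval a P2" by (rule leval_lmul) (use v in blast)+
    show "x + y \<in> R" unfolding R_def lrep_def
      apply (rule CollectI, rule exI[of _ "lmul P1 Q2 @ lmul P2 Q1"], rule exI[of _ "lmul Q1 Q2"])
      using v vm q e1 e2 by (simp add: add_frac_eq)
    show "x - y \<in> R" unfolding R_def lrep_def
      apply (rule CollectI, rule exI[of _ "lmul P1 Q2 @ lneg (lmul P2 Q1)"], rule exI[of _ "lmul Q1 Q2"])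
      using v vm q e1 e2 lvalid_lneg[OF K] by (simp add: diff_frac_eq leval_lneg)
    show "x * y \<in> R" unfolding R_def lrep_def
      apply (rule CollectI, rule exI[of _ "lmul P1 P2"], rule exI[of _ "lmul Q1 Q2"])
      using v vm q e3 by simp
  next
    fix x assume "x \<in> R"
    then obtain P Q where r: "lrep K U a x P Q" unfolding R_def by blast
    show "inverse x \<in> R"
    proof (cases "leval a P = 0")
      case True
      then have inv0: "inverse x = 0" using r by (simp add: lrep_def)
      show ?thesis unfolding R_def lrep_def by (rule CollectI, rule exI[of _ "[]"], rule exI[of _ "lconst 1"]) (use c1 inv0 in \<open>auto simp: lvalid_def\<close>)
    next
      case False
      show ?thesis unfolding R_def lrep_def by (rule CollectI, rule exI[of _ Q], rule exI[of _ P]) (use r False in \<open>auto simp: lrep_def\<close>)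
    qed
  qed
  have KR: "K \<subseteq> R"
  proof
    fix c assume cK: "c \<in> K"
    show "c \<in> R" unfolding R_def lrep_def by (rule CollectI, rule exI[of _ "lconst c"], rule exI[of _ "lconst 1"]) (use c1 cK lvalid_lconst[of c K U] in \<open>auto\<close>)
  qed
  have aR: "a ` U \<subseteq> R"
  proof
    fix y assume "y \<in> a ` U"
    then obtain v where v: "v \<in> U" "y = a v" by blast
    show "y \<in> R" unfolding R_def lrep_def by (rule CollectI, rule exI[of _ "lvar v"], rule exI[of _ "lconst 1"]) (use c1 v lvalid_lvar[OF K v(1)] in \<open>auto\<close>)
  qed
  from field_gen_least[OF sub KR aR] x show ?thesis unfolding R_def by blast
qed


lemma lrep_add:
  assumes K: "is_subfield K" and r1: "lrep K U a x P1 Q1" and r2: "lrep K U a y P2 Q2"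
  shows "lrep K U a (x + y) (lmul P1 Q2 @ lmul P2 Q1) (lmul Q1 Q2)"
proof -
  note v = r1[unfolded lrep_def] r2[unfolded lrep_def]
  have vm: "lvalid K U (lmul A B)" if "lvalid K U A" "lvalid K U B" for A B
    by (rule lvalid_lmul[OF K that])
  have q: "leval a (lmul Q1 Q2) = leval a Q1 * leval a Q2" by (rule leval_lmul) (use v in blast)+
  have e1: "leval a (lmul P1 Q2) = leval a P1 * leval a Q2" by (rule leval_lmul) (use v in blast)+
  have e2: "leval a (lmul P2 Q1) = leval a P2 * leval a Q1" by (rule leval_lmul) (use v in blast)+
  show ?thesis unfolding lrep_def using v vm q e1 e2 by (simp add: add_frac_eq)
qed

lemma lrep_mul:
  assumes K: "is_subfield K" and r1: "lrep K U a x P1 Q1" and r2: "lrep K U a y P2 Q2"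
  shows "lrep K U a (x * y) (lmul P1 P2) (lmul Q1 Q2)"
proof -
  note v = r1[unfolded lrep_def] r2[unfolded lrep_def]
  have vm: "lvalid K U (lmul A B)" if "lvalid K U A" "lvalid K U B" for A B
    by (rule lvalid_lmul[OF K that])
  have q: "leval a (lmul Q1 Q2) = leval a Q1 * leval a Q2" by (rule leval_lmul) (use v in blast)+
  have e3: "leval a (lmul P1 P2) = leval a P1 * leval a P2" by (rule leval_lmul) (use v in blast)+
  show ?thesis unfolding lrep_def using v vm q e3 by simp
qed

lemma dval_add:
  assumes K: "is_subfield K" and dd: "is_derivation K K dd"
    and r1: "lrep K U a x P1 Q1" and r2: "lrep K U a y P2 Q2"
  shows "dval dd a e (lmul P1 Q2 @ lmul P2 Q1) (lmul Q1 Q2) = dval dd a e P1 Q1 + dval dd a e P2 Q2"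
proof -
  note v = r1[unfolded lrep_def] r2[unfolded lrep_def]
  have l1: "leval a (lmul A B) = leval a A * leval a B" "lder dd a e (lmul A B) = leval a A * lder dd a e B + lder dd a e A * leval a B"
    if "lvalid K U A" "lvalid K U B" for A B
    using leval_lmul[OF that] lder_lmul[OF dd K that] by auto
  have "dval dd a e (lmul P1 Q2 @ lmul P2 Q1) (lmul Q1 Q2) =
    ((leval a P1 * lder dd a e Q2 + lder dd a e P1 * leval a Q2 + (leval a P2 * lder dd a e Q1 + lder dd a e P2 * leval a Q1))
      * (leval a Q1 * leval a Q2) - (leval a P1 * leval a Q2 + leval a P2 * leval a Q1)
      * (leval a Q1 * lder dd a e Q2 + lder dd a e Q1 * leval a Q2)) / (leval a Q1 * leval a Q2)^2"
    unfolding dval_def using v by (simp add: l1)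
  also have "\<dots> = dval dd a e P1 Q1 + dval dd a e P2 Q2"
    unfolding dval_def by (rule alg_add) (use v in blast)+
  finally show ?thesis .
qed

lemma dval_mul:
  assumes K: "is_subfield K" and dd: "is_derivation K K dd"
    and r1: "lrep K U a x P1 Q1" and r2: "lrep K U a y P2 Q2"
  shows "dval dd a e (lmul P1 P2) (lmul Q1 Q2) = x * dval dd a e P2 Q2 + dval dd a e P1 Q1 * y"
proof -
  note v = r1[unfolded lrep_def] r2[unfolded lrep_def]
  have l1: "leval a (lmul A B) = leval a A * leval a B" "lder dd a e (lmul A B) = leval a A * lder dd a e B + lder dd a e A * leval a B"
    if "lvalid K U A" "lvalid K U B" for A B
    using leval_lmul[OF that] lder_lmul[OF dd K that] by auto
  have "dval dd a e (lmul P1 P2) (lmul Q1 Q2) =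
    ((leval a P1 * lder dd a e P2 + lder dd a e P1 * leval a P2) * (leval a Q1 * leval a Q2)
     - (leval a P1 * leval a P2) * (leval a Q1 * lder dd a e Q2 + lder dd a e Q1 * leval a Q2))
     / (leval a Q1 * leval a Q2)^2"
    unfolding dval_def using v by (simp add: l1)
  also have "\<dots> = (leval a P1 / leval a Q1) * dval dd a e P2 Q2 + dval dd a e P1 Q1 * (leval a P2 / leval a Q2)"
    unfolding dval_def by (rule alg_mul) (use v in blast)+
  finally show ?thesis using v by simp
qed

lemma dval_wd:
  fixes a :: "idx \<Rightarrow> 'a::field"
  assumes m: "m > 0" and K: "is_subfield K" and dd: "is_derivation K K (d i)" and i: "i < m"
    and dc: "differential_condition m n K d a b"
    and r1: "lrep K {(\<xi>, h) \<in> indices m n. idx_lt_bnd m (add_eps \<xi> i, h) b} a x P1 Q1"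
    and r2: "lrep K {(\<xi>, h) \<in> indices m n. idx_lt_bnd m (add_eps \<xi> i, h) b} a x P2 Q2"
  shows "dval (d i) a (\<lambda>w. a (add_eps (fst w) i, snd w)) P1 Q1 = dval (d i) a (\<lambda>w. a (add_eps (fst w) i, snd w)) P2 Q2"
proof -
  let ?V = "{(\<xi>, h) \<in> indices m n. idx_lt_bnd m (add_eps \<xi> i, h) b}"
  let ?e = "\<lambda>w. a (add_eps (fst w) i, snd w)"
  note v = r1[unfolded lrep_def] r2[unfolded lrep_def]
  have vm: "lvalid K ?V (lmul A B)" if "lvalid K ?V A" "lvalid K ?V B" for A B
    by (rule lvalid_lmul[OF K that])
  have l1: "leval a (lmul A B) = leval a A * leval a B" "lder (d i) a ?e (lmul A B) = leval a A * lder (d i) a ?e B + lder (d i) a ?e A * leval a B"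
    if "lvalid K ?V A" "lvalid K ?V B" for A B
    using leval_lmul[OF that] lder_lmul[OF dd K that] by auto
  define R where "R = lmul P1 Q2 @ lneg (lmul P2 Q1)"
  have vR: "lvalid K ?V R" unfolding R_def using v vm lvalid_lneg[OF K] by simp
  have "leval a R = leval a P1 * leval a Q2 - leval a P2 * leval a Q1"
    unfolding R_def using v by (simp add: l1 leval_lneg)
  also have "\<dots> = 0" using v by (simp add: field_simps)
  finally have "lder (d i) a ?e R = 0" by (rule lder_zero[OF m K dd i dc vR])
  moreover have "lder (d i) a ?e R = leval a P1 * lder (d i) a ?e Q2 + lder (d i) a ?e P1 * leval a Q2
     + - (leval a P2 * lder (d i) a ?e Q1 + lder (d i) a ?e P2 * leval a Q1)"
  proof -
    have vn: "lvalid K ?V (lmul P2 Q1)" using v vm by blast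
    show ?thesis unfolding R_def using v vm by (simp add: l1 lder_lneg[OF dd K vn])
  qed
  ultimately show ?thesis unfolding dval_def
    by (intro alg_wd) (use v in auto)
qed


lemma part1:
  fixes a :: "idx \<Rightarrow> 'a::field"
  assumes m: "m > 0" and K: "is_subfield K" and dd: "is_derivation K K (d i)" and i: "i < m"
    and dc: "differential_condition m n K d a b"
  shows "\<exists>D. is_derivation (field_gen K (a ` {(\<xi>, h) \<in> indices m n. idx_lt_bnd m (add_eps \<xi> i, h) b}))
                (gen_below m n K a b) D
          \<and> (\<forall>x\<in>K. D x = d i x)
          \<and> (\<forall>\<sigma> k. (\<sigma>, k) \<in> indices m n \<and> idx_lt_bnd m (add_eps \<sigma> i, k) b
                 \<longrightarrow> D (a (\<sigma>, k)) = a (add_eps \<sigma> i, k))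
          \<and> (\<forall>x P Q. lrep K {(\<xi>, h) \<in> indices m n. idx_lt_bnd m (add_eps \<xi> i, h) b} a x P Q
                 \<longrightarrow> D x = dval (d i) a (\<lambda>w. a (add_eps (fst w) i, snd w)) P Q)"
proof -
  let ?V = "{(\<xi>, h) \<in> indices m n. idx_lt_bnd m (add_eps \<xi> i, h) b}"
  let ?e = "\<lambda>w. a (add_eps (fst w) i, snd w)"
  let ?L = "gen_below m n K a b"
  define D where "D x = dval (d i) a ?e (fst (SOME pq. lrep K ?V a x (fst pq) (snd pq)))
       (snd (SOME pq. lrep K ?V a x (fst pq) (snd pq)))" for x
  have Dr: "D x = dval (d i) a ?e P Q" if r: "lrep K ?V a x P Q" for x P Q
  proof -
    have "\<exists>pq. lrep K ?V a x (fst pq) (snd pq)" using r by (intro exI[of _ "(P, Q)"]) simp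
    from someI_ex[OF this] have "lrep K ?V a x (fst (SOME pq. lrep K ?V a x (fst pq) (snd pq)))
       (snd (SOME pq. lrep K ?V a x (fst pq) (snd pq)))" .
    from dval_wd[OF m K dd i dc this r] show ?thesis unfolding D_def .
  qed
  have Lsub: "is_subfield ?L" unfolding gen_below_def by (rule field_gen_subfield)
  have KL: "K \<subseteq> ?L" unfolding gen_below_def by (rule field_gen_K)
  have aV: "a ` ?V \<subseteq> ?L"
  proof
    fix y assume "y \<in> a ` ?V"
    then obtain \<xi> h where p: "(\<xi>, h) \<in> indices m n" "idx_lt_bnd m (add_eps \<xi> i, h) b" "y = a (\<xi>, h)"
      by auto
    have "idx_lt_bnd m (\<xi>, h) b" by (rule idx_lt_bnd_trans[OF idx_lt_eps[OF i] p(2)])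
    then have "(\<xi>, h) \<in> {p \<in> indices m n. idx_lt_bnd m p b}" using p by simp
    then have "a (\<xi>, h) \<in> a ` {p \<in> indices m n. idx_lt_bnd m p b}" by (rule imageI)
    then show "y \<in> ?L" unfolding gen_below_def p(3) by (rule subsetD[OF field_gen_S])
  qed
  have eV: "?e ` ?V \<subseteq> ?L"
  proof
    fix y assume "y \<in> ?e ` ?V"
    then obtain \<xi> h where p: "(\<xi>, h) \<in> indices m n" "idx_lt_bnd m (add_eps \<xi> i, h) b" "y = a (add_eps \<xi> i, h)"
      by auto
    have "(add_eps \<xi> i, h) \<in> indices m n" by (rule add_eps_indices[OF i p(1)])
    then have "(add_eps \<xi> i, h) \<in> {p \<in> indices m n. idx_lt_bnd m p b}" using p by simp
    then have "a (add_eps \<xi> i, h) \<in> a ` {p \<in> indices m n. idx_lt_bnd m p b}" by (rule imageI)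
    then show "y \<in> ?L" unfolding gen_below_def p(3) by (rule subsetD[OF field_gen_S])
  qed
  have dL: "\<forall>x\<in>K. d i x \<in> ?L"
  proof
    fix x assume "x \<in> K"
    then have "d i x \<in> K" using dd by (simp add: is_derivation_def)
    then show "d i x \<in> ?L" using KL by blast
  qed
  have c1: "lvalid K ?V (lconst 1)" by (rule lvalid_lconst[OF sf_1[OF K]])
  have der: "is_derivation (field_gen K (a ` ?V)) ?L D"
    unfolding is_derivation_def
  proof (intro conjI ballI)
    fix x assume "x \<in> field_gen K (a ` ?V)"
    then obtain P Q where r: "lrep K ?V a x P Q" using rep_exists[OF K] by blast
    note v = r[unfolded lrep_def]
    have "leval a P \<in> ?L" "leval a Q \<in> ?L" "lder (d i) a ?e P \<in> ?L" "lder (d i) a ?e Q \<in> ?L"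
      using leval_in[OF Lsub KL aV] lder_in[OF Lsub KL aV eV dL] v by blast+
    then show "D x \<in> ?L" unfolding Dr[OF r] dval_def
      by (intro sf_divide[OF Lsub] sf_diff[OF Lsub] sf_mult[OF Lsub] sf_power[OF Lsub])
  next
    fix x y assume "x \<in> field_gen K (a ` ?V)" "y \<in> field_gen K (a ` ?V)"
    then obtain P1 Q1 P2 Q2 where r1: "lrep K ?V a x P1 Q1" and r2: "lrep K ?V a y P2 Q2"
      using rep_exists[OF K] by meson
    show "D (x + y) = D x + D y"
      unfolding Dr[OF lrep_add[OF K r1 r2]] Dr[OF r1] Dr[OF r2] by (rule dval_add[OF K dd r1 r2])
    show "D (x * y) = x * D y + D x * y"
      unfolding Dr[OF lrep_mul[OF K r1 r2]] Dr[OF r1] Dr[OF r2] by (rule dval_mul[OF K dd r1 r2])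
  qed
  have onK: "\<forall>x\<in>K. D x = d i x"
  proof
    fix x assume x: "x \<in> K"
    have r: "lrep K ?V a x (lconst x) (lconst 1)"
      unfolding lrep_def using lvalid_lconst[OF x] c1 by simp
    show "D x = d i x" unfolding Dr[OF r] dval_def by (simp add: der_1[OF dd K])
  qed
  have gens: "\<forall>\<sigma> k. (\<sigma>, k) \<in> indices m n \<and> idx_lt_bnd m (add_eps \<sigma> i, k) b
                 \<longrightarrow> D (a (\<sigma>, k)) = a (add_eps \<sigma> i, k)"
  proof (intro allI impI)
    fix \<sigma> k assume "(\<sigma>, k) \<in> indices m n \<and> idx_lt_bnd m (add_eps \<sigma> i, k) b"
    then have vV: "(\<sigma>, k) \<in> ?V" by simp
    have r: "lrep K ?V a (a (\<sigma>, k)) (lvar (\<sigma>, k)) (lconst 1)"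
      unfolding lrep_def using lvalid_lvar[OF K vV] c1 by simp
    show "D (a (\<sigma>, k)) = a (add_eps \<sigma> i, k)" unfolding Dr[OF r] dval_def
      by (simp add: lder_lvar[OF dd K] der_1[OF dd K])
  qed
  have Dr': "\<forall>x P Q. lrep K ?V a x P Q \<longrightarrow> D x = dval (d i) a ?e P Q"
    using Dr by blast
  show ?thesis
    by (rule exI[of _ D], intro conjI, fact der, fact onK, fact gens, fact Dr')
qed


lemma poly_over_pCons: "poly_over F (pCons c q) \<Longrightarrow> c \<in> F \<and> poly_over F q"
  unfolding poly_over_def by (metis coeff_pCons_0 coeff_pCons_Suc)

lemma poly_in: "is_subfield G \<Longrightarrow> poly_over G q \<Longrightarrow> x \<in> G \<Longrightarrow> poly q x \<in> G"
proof (induction q)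
  case 0 then show ?case by (simp add: sf_0)
next
  case (pCons c q)
  from poly_over_pCons[OF pCons.prems(2)] have "c \<in> G" "poly_over G q" by auto
  with pCons show ?case by (simp add: sf_add sf_mult)
qed

lemma poly_over_mono: "F \<subseteq> G \<Longrightarrow> poly_over F q \<Longrightarrow> poly_over G q"
  unfolding poly_over_def by blast

lemma poly_over_pderiv:
  assumes F: "is_subfield F" and q: "poly_over F q"
  shows "poly_over F (pderiv q)"
  unfolding poly_over_def coeff_pderiv
proof
  fix j
  have "coeff q (Suc j) \<in> F" using q unfolding poly_over_def by blast
  then show "of_nat (Suc j) * coeff q (Suc j) \<in> F" by (rule sf_mult[OF F sf_of_nat[OF F]])
qed

lemma sep_root:
  fixes p :: "'a::field poly"
  assumes "separable_poly p" "poly p x = 0"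
  shows "poly (pderiv p) x \<noteq> 0"
proof
  assume "poly (pderiv p) x = 0"
  then have "[:- x, 1:] dvd pderiv p" by (simp add: poly_eq_0_iff_dvd)
  moreover have "[:- x, 1:] dvd p" using assms(2) by (simp add: poly_eq_0_iff_dvd)
  ultimately have "is_unit [:- x, 1:]"
    using coprime_common_divisor[OF assms(1)[unfolded separable_poly_def]] by blast
  then show False by (simp add: is_unit_iff_degree)
qed

lemma der_zero_gen: "is_derivation F L D \<Longrightarrow> is_subfield F \<Longrightarrow> D 0 = 0"
proof -
  assume a: "is_derivation F L D" "is_subfield F"
  have "D (0 + 0) = D 0 + D 0" using a(1) sf_0[OF a(2)] unfolding is_derivation_def by blast
  then show ?thesis by (metis add_0_right add_left_cancel)
qed

lemma deriv_poly:
  assumes Dd: "is_derivation Dom L D" and Dom: "is_subfield Dom" and G: "is_subfield G"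
    and FD: "F \<subseteq> Dom" and xD: "x \<in> Dom" and xG: "x \<in> G" and DF: "\<forall>c\<in>F. D c \<in> G"
    and q: "poly_over F q"
  shows "poly q x \<in> Dom \<and> (\<exists>T\<in>G. D (poly q x) = T + poly (pderiv q) x * D x)"
  using q
proof (induction q)
  case 0
  then show ?case using der_zero_gen[OF Dd Dom] sf_0[OF Dom] sf_0[OF G] by auto
next
  case (pCons c q)
  from poly_over_pCons[OF pCons.prems] have c: "c \<in> F" and qF: "poly_over F q" by auto
  from pCons.IH[OF qF] obtain T where qD: "poly q x \<in> Dom" and T: "T \<in> G"
    and DT: "D (poly q x) = T + poly (pderiv q) x * D x" by blast
  have cD: "c \<in> Dom" using c FD by blast
  have xq: "x * poly q x \<in> Dom" by (rule sf_mult[OF Dom xD qD])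
  have "D (poly (pCons c q) x) = D (c + x * poly q x)" by simp
  also have "\<dots> = D c + (x * D (poly q x) + D x * poly q x)"
    using Dd cD xq xD qD unfolding is_derivation_def by simp
  also have "\<dots> = (D c + x * T) + poly (pderiv (pCons c q)) x * D x"
    by (simp add: DT pderiv_pCons algebra_simps)
  finally have "D (poly (pCons c q) x) = (D c + x * T) + poly (pderiv (pCons c q)) x * D x" .
  moreover have "D c + x * T \<in> G" using DF c T xG by (intro sf_add[OF G] sf_mult[OF G]) auto
  moreover have "poly (pCons c q) x \<in> Dom" using cD xq by (simp add: sf_add[OF Dom])
  ultimately show ?case by blast
qed

lemma linear_sep_leader:
  fixes y :: "'a::field"
  assumes G: "is_subfield G" and y: "y \<in> G"
  shows "separably_algebraic_over G y"
  unfolding separably_algebraic_over_def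
proof (intro exI conjI)
  show "is_min_poly G y [:- y, 1:]"
    unfolding is_min_poly_def
  proof (intro conjI allI impI)
    show "poly_over G [:- y, 1:]" unfolding poly_over_def
    proof
      fix j show "coeff [:- y, 1:] j \<in> G"
        by (cases j; cases "j - 1") (auto simp: sf_neg[OF G y] sf_1[OF G] sf_0[OF G])
    qed
    show "lead_coeff [:- y, 1:] = 1" by simp
    show "poly [:- y, 1:] y = 0" by simp
    fix q assume q: "q \<noteq> 0 \<and> poly_over G q \<and> poly q y = 0"
    show "degree [:- y, 1:] \<le> degree q"
    proof (rule ccontr)
      assume "\<not> ?thesis"
      then have "degree q = 0" by simp
      then obtain c where qc: "q = [:c:]" by (rule degree_eq_zeroE)
      with q have "c \<noteq> 0" "poly [:c:] y = 0" by auto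
      then show False by simp
    qed
  qed
  show "separable_poly [:- y, 1:]"
  proof -
    have e: "pderiv [:- y, 1:] = 1" by (simp add: pderiv_pCons one_pCons)
    show ?thesis unfolding separable_poly_def e by (rule coprime_1_right)
  qed
qed


lemma part2:
  fixes a :: "idx \<Rightarrow> 'a::field"
  assumes m: "m > 0" and K: "is_subfield K" and dd: "is_derivation K K (d i)" and i: "i < m"
    and dc: "differential_condition m n K d a b"
    and sk: "(\<sigma>, k) \<in> indices m n" and sl: "separable_leader m n K a (\<sigma>, k)"
    and bnd: "idx_lt_bnd m (add_eps \<sigma> i, k) b"
  shows "a (add_eps \<sigma> i, k) \<in> gen_below m n K a (Some (add_eps \<sigma> i, k))
     \<and> separable_leader m n K a (add_eps \<sigma> i, k)"
proof -
  let ?V = "{(\<xi>, h) \<in> indices m n. idx_lt_bnd m (add_eps \<xi> i, h) b}"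
  let ?e = "\<lambda>w. a (add_eps (fst w) i, snd w)"
  let ?U = "{p \<in> indices m n. idx_lt m p (\<sigma>, k)}"
  let ?W = "{p \<in> indices m n. idx_lt m p (add_eps \<sigma> i, k)}"
  let ?F = "field_gen K (a ` ?U)"
  let ?G = "field_gen K (a ` ?W)"
  let ?Dom = "field_gen K (a ` ?V)"
  have Fdef: "gen_below m n K a (Some (\<sigma>, k)) = ?F" unfolding gen_below_def idx_lt_bnd_def by simp
  have Gdef: "gen_below m n K a (Some (add_eps \<sigma> i, k)) = ?G" unfolding gen_below_def idx_lt_bnd_def by simp
  from part1[OF m K dd i dc] obtain D where
    Dd: "is_derivation ?Dom (gen_below m n K a b) D" and
    Dgen: "\<forall>\<sigma> k. (\<sigma>, k) \<in> indices m n \<and> idx_lt_bnd m (add_eps \<sigma> i, k) b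
                 \<longrightarrow> D (a (\<sigma>, k)) = a (add_eps \<sigma> i, k)" and
    Drep: "\<forall>x P Q. lrep K ?V a x P Q \<longrightarrow> D x = dval (d i) a ?e P Q"
    by blast
  have UV: "?U \<subseteq> ?V"
  proof
    fix p assume p: "p \<in> ?U"
    obtain \<xi> h where ph: "p = (\<xi>, h)" by (cases p)
    from p ph have "idx_lt m (add_eps \<xi> i, h) (add_eps \<sigma> i, k)" using idx_lt_mono_eps[OF i] by auto
    then have "idx_lt_bnd m (add_eps \<xi> i, h) b" by (rule idx_lt_bnd_trans[OF _ bnd])
    then show "p \<in> ?V" using p ph by auto
  qed
  have UW: "?U \<subseteq> ?W" using idx_lt_trans[OF _ idx_lt_eps[OF i]] by blast
  have Gsub: "is_subfield ?G" by (rule field_gen_subfield)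
  have KG: "K \<subseteq> ?G" by (rule field_gen_K)
  have aW: "a ` ?W \<subseteq> ?G" by (rule field_gen_S)
  have aU: "a ` ?U \<subseteq> ?G" using aW UW by blast
  have eU: "?e ` ?U \<subseteq> ?G"
  proof
    fix y assume "y \<in> ?e ` ?U"
    then obtain \<xi> h where p: "(\<xi>, h) \<in> ?U" "y = a (add_eps \<xi> i, h)" by auto
    have "(add_eps \<xi> i, h) \<in> indices m n" using add_eps_indices[OF i] p(1) by blast
    moreover have "idx_lt m (add_eps \<xi> i, h) (add_eps \<sigma> i, k)" using idx_lt_mono_eps[OF i] p(1) by blast
    ultimately have "(add_eps \<xi> i, h) \<in> ?W" by simp
    then show "y \<in> ?G" using aW p(2) by blast
  qed
  have dG: "\<forall>x\<in>K. d i x \<in> ?G"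
  proof
    fix x assume "x \<in> K"
    then have "d i x \<in> K" using dd by (simp add: is_derivation_def)
    then show "d i x \<in> ?G" using KG by blast
  qed
  have FD: "?F \<subseteq> ?Dom" by (rule field_gen_mono) (use UV in blast)
  have FG: "?F \<subseteq> ?G" by (rule field_gen_mono) (use UW in blast)
  have DF: "\<forall>c\<in>?F. D c \<in> ?G"
  proof
    fix c assume "c \<in> ?F"
    then obtain P Q where r: "lrep K ?U a c P Q" using rep_exists[OF K] by blast
    note v = r[unfolded lrep_def]
    have rV: "lrep K ?V a c P Q" unfolding lrep_def using v lvalid_mono[OF UV] by blast
    have "leval a P \<in> ?G" "leval a Q \<in> ?G" "lder (d i) a ?e P \<in> ?G" "lder (d i) a ?e Q \<in> ?G"
      using leval_in[OF Gsub KG aU] lder_in[OF Gsub KG aU eU dG] v by blast+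
    then show "D c \<in> ?G" unfolding Drep[rule_format, OF rV] dval_def
      by (intro sf_divide[OF Gsub] sf_diff[OF Gsub] sf_mult[OF Gsub] sf_power[OF Gsub])
  qed
  let ?x = "a (\<sigma>, k)"
  let ?y = "a (add_eps \<sigma> i, k)"
  have xV: "(\<sigma>, k) \<in> ?V" using sk bnd by simp
  have xD: "?x \<in> ?Dom" by (rule subsetD[OF field_gen_S imageI[OF xV]])
  have xW: "(\<sigma>, k) \<in> ?W" using sk idx_lt_eps[OF i] by simp
  have xG: "?x \<in> ?G" by (rule subsetD[OF aW imageI[OF xW]])
  have Dx: "D ?x = ?y" using Dgen sk bnd by blast
  from sl obtain p where mp: "is_min_poly ?F ?x p" and sp: "separable_poly p"
    unfolding separable_leader_def separably_algebraic_over_def Fdef by blast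
  have pF: "poly_over ?F p" and px: "poly p ?x = 0" using mp unfolding is_min_poly_def by auto
  have Fsub: "is_subfield ?F" by (rule field_gen_subfield)
  have Domsub: "is_subfield ?Dom" by (rule field_gen_subfield)
  from deriv_poly[OF Dd Domsub Gsub FD xD xG DF pF]
  obtain T where T: "T \<in> ?G" and DT: "D (poly p ?x) = T + poly (pderiv p) ?x * D ?x" by blast
  have "D (poly p ?x) = 0" using px der_zero_gen[OF Dd Domsub] by simp
  with DT Dx have eq: "T + poly (pderiv p) ?x * ?y = 0" by simp
  have nz: "poly (pderiv p) ?x \<noteq> 0" by (rule sep_root[OF sp px])
  have pG: "poly (pderiv p) ?x \<in> ?G"
    by (rule poly_in[OF Gsub poly_over_mono[OF FG poly_over_pderiv[OF Fsub pF]] xG])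
  have "?y = - T / poly (pderiv p) ?x" using eq nz by (simp add: field_simps eq_neg_iff_add_eq_0)
  then have yG: "?y \<in> ?G" using sf_divide[OF Gsub sf_neg[OF Gsub T] pG] by simp
  have "separable_leader m n K a (add_eps \<sigma> i, k)"
    unfolding separable_leader_def Gdef by (rule linear_sep_leader[OF Gsub yG])
  then show ?thesis using yG Gdef by simp
qed


lemma part3:
  fixes a :: "idx \<Rightarrow> 'a::field"
  assumes m: "m > 0" and K: "is_subfield K" and dd: "\<forall>i<m. is_derivation K K (d i)"
    and dc: "differential_condition m n K d a b"
    and sk: "(\<sigma>, k) \<in> indices m n" and sl: "separable_leader m n K a (\<sigma>, k)"
  shows "(\<rho>, k) \<in> indices m n \<Longrightarrow> idx_lt_bnd m (\<rho>, k) b \<Longrightarrow> \<sigma> \<le> \<rho>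
     \<Longrightarrow> separable_leader m n K a (\<rho>, k)"
proof (induction "(\<Sum>j<m. \<rho> j - \<sigma> j)" arbitrary: \<rho> rule: less_induct)
  case less
  show ?case
  proof (cases "\<rho> = \<sigma>")
    case True then show ?thesis using sl by simp
  next
    case False
    then obtain j where jne: "\<rho> j \<noteq> \<sigma> j" by (auto simp: fun_eq_iff)
    have zs: "\<forall>l\<ge>m. \<sigma> l = 0" using sk by (simp add: indices_def)
    have zr: "\<forall>l\<ge>m. \<rho> l = 0" using less.prems(1) by (simp add: indices_def)
    have jm: "j < m"
    proof (rule ccontr)
      assume "\<not> j < m"
      then show False using zs zr jne by simp
    qed
    have lef: "\<forall>l. \<sigma> l \<le> \<rho> l" using less.prems(3) by (simp add: le_fun_def)
    then have lt: "\<sigma> j < \<rho> j" using jne by (metis le_neq_implies_less)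
    define \<rho>' where "\<rho>' = \<rho>(j := \<rho> j - 1)"
    have re: "add_eps \<rho>' j = \<rho>"
    proof
      fix l show "add_eps \<rho>' j l = \<rho> l" using lt by (simp add: add_eps_def \<rho>'_def)
    qed
    have r'k: "(\<rho>', k) \<in> indices m n" using less.prems(1) jm by (auto simp: indices_def \<rho>'_def)
    have le': "\<sigma> \<le> \<rho>'" unfolding le_fun_def \<rho>'_def using lef lt by auto
    have lt': "idx_lt m (\<rho>', k) (\<rho>, k)" using idx_lt_eps[OF jm, of \<rho>' k] re by simp
    have rb': "idx_lt_bnd m (\<rho>', k) b" by (rule idx_lt_bnd_trans[OF lt' less.prems(2)])
    have dec: "(\<Sum>l<m. \<rho>' l - \<sigma> l) < (\<Sum>l<m. \<rho> l - \<sigma> l)"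
    proof (rule sum_strict_mono_ex1)
      show "\<forall>x\<in>{..<m}. \<rho>' x - \<sigma> x \<le> \<rho> x - \<sigma> x" by (simp add: \<rho>'_def diff_le_mono)
      show "\<exists>a\<in>{..<m}. \<rho>' a - \<sigma> a < \<rho> a - \<sigma> a" using jm lt by (intro bexI[of _ j]) (auto simp: \<rho>'_def)
    qed simp
    have sl': "separable_leader m n K a (\<rho>', k)" by (rule less.hyps[OF dec r'k rb' le'])
    have bnd: "idx_lt_bnd m (add_eps \<rho>' j, k) b" using less.prems(2) re by simp
    from part2[OF m K dd[rule_format, OF jm] jm dc r'k sl' bnd] show ?thesis using re by simp
  qed
qed


theorem lemma4p1:
  fixes m n :: nat and K :: "'a::field set" and d :: "nat \<Rightarrow> 'a \<Rightarrow> 'a"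
    and a :: "idx \<Rightarrow> 'a" and b :: "idx option"
  assumes "m > 0" and "n > 0"
    and "is_subfield K"
    and "\<forall>i<m. is_derivation K K (d i)"
    and "\<forall>i<m. \<forall>j<m. \<forall>x\<in>K. d i (d j x) = d j (d i x)"
    and "\<forall>q. b = Some q \<longrightarrow> q \<in> indices m n"
    and "differential_condition m n K d a b"
  defines "L \<equiv> gen_below m n K a b"
  shows "(\<forall>i<m. \<exists>D.
            is_derivation (field_gen K (a ` {(\<xi>, h) \<in> indices m n. idx_lt_bnd m (add_eps \<xi> i, h) b})) L D
          \<and> (\<forall>x\<in>K. D x = d i x)
          \<and> (\<forall>\<sigma> k. (\<sigma>, k) \<in> indices m n \<and> idx_lt_bnd m (add_eps \<sigma> i, k) b
                 \<longrightarrow> D (a (\<sigma>, k)) = a (add_eps \<sigma> i, k)))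
   \<and> (\<forall>i<m. \<forall>\<sigma> k. (\<sigma>, k) \<in> indices m n \<and> separable_leader m n K a (\<sigma>, k)
          \<and> idx_lt_bnd m (add_eps \<sigma> i, k) b
          \<longrightarrow> a (add_eps \<sigma> i, k) \<in> gen_below m n K a (Some (add_eps \<sigma> i, k))
            \<and> separable_leader m n K a (add_eps \<sigma> i, k))
   \<and> (\<forall>\<sigma> \<rho> k. (\<sigma>, k) \<in> indices m n \<and> (\<rho>, k) \<in> indices m n \<and> idx_lt_bnd m (\<rho>, k) b
          \<and> \<sigma> \<le> \<rho> \<and> separable_leader m n K a (\<sigma>, k)
          \<longrightarrow> separable_leader m n K a (\<rho>, k))"
proof -
  have dd: "\<forall>i<m. is_derivation K K (d i)" using assms(4) .
  have c1: "\<forall>i<m. \<exists>D.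
            is_derivation (field_gen K (a ` {(\<xi>, h) \<in> indices m n. idx_lt_bnd m (add_eps \<xi> i, h) b})) L D
          \<and> (\<forall>x\<in>K. D x = d i x)
          \<and> (\<forall>\<sigma> k. (\<sigma>, k) \<in> indices m n \<and> idx_lt_bnd m (add_eps \<sigma> i, k) b
                 \<longrightarrow> D (a (\<sigma>, k)) = a (add_eps \<sigma> i, k))"
  proof (intro allI impI)
    fix i assume i: "i < m"
    from part1[OF assms(1) assms(3) dd[rule_format, OF i] i assms(7)]
    obtain D where D1: "is_derivation (field_gen K (a ` {(\<xi>, h) \<in> indices m n. idx_lt_bnd m (add_eps \<xi> i, h) b})) (gen_below m n K a b) D"
      and D2: "\<forall>x\<in>K. D x = d i x"
      and D3: "\<forall>\<sigma> k. (\<sigma>, k) \<in> indices m n \<and> idx_lt_bnd m (add_eps \<sigma> i, k) b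
                 \<longrightarrow> D (a (\<sigma>, k)) = a (add_eps \<sigma> i, k)"
      by blast
    show "\<exists>D. is_derivation (field_gen K (a ` {(\<xi>, h) \<in> indices m n. idx_lt_bnd m (add_eps \<xi> i, h) b})) L D
          \<and> (\<forall>x\<in>K. D x = d i x)
          \<and> (\<forall>\<sigma> k. (\<sigma>, k) \<in> indices m n \<and> idx_lt_bnd m (add_eps \<sigma> i, k) b
                 \<longrightarrow> D (a (\<sigma>, k)) = a (add_eps \<sigma> i, k))"
      unfolding L_def by (rule exI[of _ D]) (intro conjI D1 D2 D3)
  qed
  have c2: "\<forall>i<m. \<forall>\<sigma> k. (\<sigma>, k) \<in> indices m n \<and> separable_leader m n K a (\<sigma>, k)
          \<and> idx_lt_bnd m (add_eps \<sigma> i, k) b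
          \<longrightarrow> a (add_eps \<sigma> i, k) \<in> gen_below m n K a (Some (add_eps \<sigma> i, k))
            \<and> separable_leader m n K a (add_eps \<sigma> i, k)"
  proof (intro allI impI)
    fix i \<sigma> k assume i: "i < m" and h: "(\<sigma>, k) \<in> indices m n \<and> separable_leader m n K a (\<sigma>, k)
          \<and> idx_lt_bnd m (add_eps \<sigma> i, k) b"
    from h have h1: "(\<sigma>, k) \<in> indices m n" and h2: "separable_leader m n K a (\<sigma>, k)"
      and h3: "idx_lt_bnd m (add_eps \<sigma> i, k) b" by auto
    show "a (add_eps \<sigma> i, k) \<in> gen_below m n K a (Some (add_eps \<sigma> i, k))
            \<and> separable_leader m n K a (add_eps \<sigma> i, k)"
      by (rule part2[OF assms(1) assms(3) dd[rule_format, OF i] i assms(7) h1 h2 h3])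
  qed
  have c3: "\<forall>\<sigma> \<rho> k. (\<sigma>, k) \<in> indices m n \<and> (\<rho>, k) \<in> indices m n \<and> idx_lt_bnd m (\<rho>, k) b
          \<and> \<sigma> \<le> \<rho> \<and> separable_leader m n K a (\<sigma>, k)
          \<longrightarrow> separable_leader m n K a (\<rho>, k)"
  proof (intro allI impI)
    fix \<sigma> \<rho> k assume h: "(\<sigma>, k) \<in> indices m n \<and> (\<rho>, k) \<in> indices m n \<and> idx_lt_bnd m (\<rho>, k) b
          \<and> \<sigma> \<le> \<rho> \<and> separable_leader m n K a (\<sigma>, k)"
    from h have h1: "(\<sigma>, k) \<in> indices m n" and h2: "(\<rho>, k) \<in> indices m n"
      and h3: "idx_lt_bnd m (\<rho>, k) b" and h4: "\<sigma> \<le> \<rho>" and h5: "separable_leader m n K a (\<sigma>, k)"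
      by auto
    show "separable_leader m n K a (\<rho>, k)"
      by (rule part3[OF assms(1) assms(3) dd assms(7) h1 h5 h2 h3 h4])
  qed
  show ?thesis using c1 c2 c3 by (intro conjI)
qed

end
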